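(* Let $\Pi\subseteq\Sigma$ and suppose the dual cone $\check\sigma_\Pi=\{m\in M_\mathbb{R}:\langle m,n\rangle\ge0\ \forall n\in\sigma_\Pi\}$ has dimension $d$. Then either $\Pi=\Sigma$ or the simplicial complex $\Pi\cap\Xi$ is contractible.
   Context: $N\cong\mathbb{Z}^d$, $M=\operatorname{Hom}(N,\mathbb{Z})$, $\sigma\subset N_\mathbb{R}$ a strongly convex rational polyhedral cone of dimension $d$, $\Sigma=\sigma(1)$ its set of rays with primitive generators $n(\rho)$. $\sigma_\Pi$ is the cone generated over $\mathbb{R}_{\ge0}$ by $-n(\rho)$, $\rho\in\Pi$, and $n(\rho)$, $\rho\in\Sigma\setminus\Pi$. For $\Upsilon\subseteq\Sigma$, $\tau_\Upsilon$ is the minimal face of $\sigma$ whose set of rays contains $\Upsilon$. $\Xi=\{\Upsilon\subseteq\Sigma:\tau_\Upsilon\ne\sigma\}$, a simplicial complex on the vertex set $\Sigma$, and $\Pi\cap\Xi=\{\Upsilon\in\Xi:\Upsilon\subseteq\Pi\}$. Following the paper's convention for the empty simplex, for $\Pi=\emptyset$ the complex $\Pi\cap\Xi$ is regarded as contractible (acyclic). *)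

theory Defs
  imports "HOL-Analysis.Analysis"
begin

text \<open>Lattice N = integer points of real^'n; N_R = real^'n; M_R identified with real^'n via the inner product.\<close>

definition lattice_pt :: "real^'n \<Rightarrow> bool" where
  "lattice_pt v \<longleftrightarrow> (\<forall>i. v $ i \<in> \<int>)"

definition gen_cone :: "(real^'n) set \<Rightarrow> (real^'n) set" where
  "gen_cone S = {y. \<exists>c. (\<forall>v\<in>S. c v \<ge> 0) \<and> y = (\<Sum>v\<in>S. c v *\<^sub>R v)}"

definition rational_polyhedral_cone :: "(real^'n) set \<Rightarrow> bool" where
  "rational_polyhedral_cone \<sigma> \<longleftrightarrow> (\<exists>S. finite S \<and> (\<forall>v\<in>S. lattice_pt v) \<and> \<sigma> = gen_cone S)"

definition strongly_convex :: "(real^'n) set \<Rightarrow> bool" where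
  "strongly_convex \<sigma> \<longleftrightarrow> \<sigma> \<inter> uminus ` \<sigma> = {0}"

definition rays :: "(real^'n) set \<Rightarrow> (real^'n) set set" where
  "rays \<sigma> = {\<rho>. \<rho> face_of \<sigma> \<and> aff_dim \<rho> = 1}"

definition prim_gen :: "(real^'n) set \<Rightarrow> real^'n" where
  "prim_gen \<rho> = (THE v. v \<in> \<rho> \<and> lattice_pt v \<and> v \<noteq> 0 \<and>
       (\<forall>w\<in>\<rho>. lattice_pt w \<longrightarrow> (\<exists>k::nat. w = real k *\<^sub>R v)))"

definition sigma_Pi :: "(real^'n) set \<Rightarrow> (real^'n) set set \<Rightarrow> (real^'n) set" where
  "sigma_Pi \<sigma> P = gen_cone ((\<lambda>\<rho>. - prim_gen \<rho>) ` P \<union> prim_gen ` (rays \<sigma> - P))"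

definition dual_cone :: "(real^'n) set \<Rightarrow> (real^'n) set" where
  "dual_cone C = {m. \<forall>n\<in>C. 0 \<le> m \<bullet> n}"

definition min_face :: "(real^'n) set \<Rightarrow> (real^'n) set set \<Rightarrow> (real^'n) set" where
  "min_face \<sigma> \<Upsilon> = \<Inter>{F. F face_of \<sigma> \<and> \<Upsilon> \<subseteq> {\<rho>\<in>rays \<sigma>. \<rho> \<subseteq> F}}"

definition Xi :: "(real^'n) set \<Rightarrow> (real^'n) set set set" where
  "Xi \<sigma> = {\<Upsilon>. \<Upsilon> \<subseteq> rays \<sigma> \<and> min_face \<sigma> \<Upsilon> \<noteq> \<sigma>}"

text \<open>Geometric realization of an abstract simplicial complex K on vertex set V, as a subspace
  of the product space R^V: barycentric coordinate functions whose support is a simplex of K.\<close>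
definition geom_real :: "'a set \<Rightarrow> 'a set set \<Rightarrow> ('a \<Rightarrow> real) topology" where
  "geom_real V K = subtopology (powertop_real V)
     {x \<in> extensional V. (\<forall>v\<in>V. 0 \<le> x v) \<and> (\<Sum>v\<in>V. x v) = 1 \<and> {v\<in>V. x v \<noteq> 0} \<in> K}"

end

theory Submission
  imports Defs
begin
lemma cc_sum:
  assumes "convex_cone C" "finite T" "\<And>v. v \<in> T \<Longrightarrow> 0 \<le> c v \<and> v \<in> C"
  shows "(\<Sum>v\<in>T. c v *\<^sub>R v) \<in> C"
  using assms(2,3)
proof (induction T rule: finite_induct)
  case empty then show ?case using assms(1) by (simp add: convex_cone_iff)
next
  case (insert x F)
  then show ?case using assms(1) by (simp add: convex_cone_add convex_cone_scaleR)
qed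

lemma gen_cone_mem: "finite S \<Longrightarrow> s \<in> S \<Longrightarrow> s \<in> gen_cone S"
proof -
  assume "finite S" "s \<in> S"
  have "(\<Sum>v\<in>S. (if v = s then 1 else 0) *\<^sub>R v) = (\<Sum>v\<in>S. if v = s then v else 0)"
    by (rule sum.cong) auto
  also have "\<dots> = s" using \<open>finite S\<close> \<open>s \<in> S\<close> by (simp add: sum.delta')
  finally show ?thesis unfolding gen_cone_def
    by (intro CollectI exI[where x="\<lambda>v. if v = s then 1 else 0"]) auto
qed

lemma convex_cone_gen_cone: "finite S \<Longrightarrow> convex_cone (gen_cone S)"
  unfolding convex_cone_iff
proof (intro conjI ballI allI impI)
  show "0 \<in> gen_cone S" unfolding gen_cone_def by (auto intro!: exI[where x="\<lambda>v. 0"])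
next
  fix x y assume "x \<in> gen_cone S" "y \<in> gen_cone S"
  then obtain a b where "\<forall>v\<in>S. 0 \<le> a v" "x = (\<Sum>v\<in>S. a v *\<^sub>R v)" "\<forall>v\<in>S. 0 \<le> b v" "y = (\<Sum>v\<in>S. b v *\<^sub>R v)"
    unfolding gen_cone_def by auto
  then show "x + y \<in> gen_cone S" unfolding gen_cone_def
    by (auto intro!: exI[where x="\<lambda>v. a v + b v"] simp: sum.distrib scaleR_add_left)
next
  fix x and c :: real assume "x \<in> gen_cone S" "0 \<le> c"
  then obtain a where "\<forall>v\<in>S. 0 \<le> a v" "x = (\<Sum>v\<in>S. a v *\<^sub>R v)"
    unfolding gen_cone_def by auto
  then show "c *\<^sub>R x \<in> gen_cone S" unfolding gen_cone_def using \<open>0 \<le> c\<close>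
    by (auto intro!: exI[where x="\<lambda>v. c * a v"] simp: scaleR_sum_right)
qed

lemma gen_cone_eq: "finite S \<Longrightarrow> gen_cone S = convex_cone hull S"
proof
  assume "finite S"
  show "gen_cone S \<subseteq> convex_cone hull S"
  proof
    fix y assume "y \<in> gen_cone S"
    then obtain c where "\<forall>v\<in>S. 0 \<le> c v" "y = (\<Sum>v\<in>S. c v *\<^sub>R v)" unfolding gen_cone_def by auto
    then show "y \<in> convex_cone hull S"
      using cc_sum[OF convex_cone_convex_cone_hull \<open>finite S\<close>, of c] by (auto simp: hull_inc)
  qed
  show "convex_cone hull S \<subseteq> gen_cone S"
    by (rule hull_minimal) (auto simp: gen_cone_mem \<open>finite S\<close> convex_cone_gen_cone)
qed

definition hray :: "'a::real_vector \<Rightarrow> 'a set" where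
  "hray s = {t *\<^sub>R s | t. 0 \<le> t}"

lemma hray_mem: "0 \<le> t \<Longrightarrow> t *\<^sub>R s \<in> hray s" by (auto simp: hray_def)
lemma hray_self: "s \<in> hray s" using hray_mem[of 1 s] by simp
lemma hray_zero: "0 \<in> hray s" using hray_mem[of 0 s] by simp
lemma hray_scale: "0 < c \<Longrightarrow> hray (c *\<^sub>R s) = hray s"
  unfolding hray_def
proof (intro set_eqI iffI)
  fix x assume "0 < c" "x \<in> {t *\<^sub>R c *\<^sub>R s |t. 0 \<le> t}"
  then obtain t where "0 \<le> t" "x = t *\<^sub>R c *\<^sub>R s" by auto
  then show "x \<in> {t *\<^sub>R s |t. 0 \<le> t}" using \<open>0<c\<close> by (auto intro!: exI[where x="t*c"])
next
  fix x assume "0 < c" "x \<in> {t *\<^sub>R s |t. 0 \<le> t}"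
  then obtain t where "0 \<le> t" "x = t *\<^sub>R s" by auto
  then show "x \<in> {t *\<^sub>R c *\<^sub>R s |t. 0 \<le> t}" using \<open>0<c\<close> by (auto intro!: exI[where x="t/c"])
qed

locale rcone =
  fixes \<sigma> :: "(real^'n) set" and S0 :: "(real^'n) set"
  assumes finS0: "finite S0" and latS0: "\<forall>v\<in>S0. lattice_pt v" and sig: "\<sigma> = gen_cone S0"
    and pointed: "strongly_convex \<sigma>" and full: "aff_dim \<sigma> = int CARD('n)"
begin

lemma sig_hull: "\<sigma> = convex_cone hull S0"
  using sig gen_cone_eq finS0 by simp

lemma cc: "convex_cone \<sigma>"
  using sig convex_cone_gen_cone finS0 by simp

lemma zero_in: "0 \<in> \<sigma>" using cc by (simp add: convex_cone_iff)
lemma add_in: "x \<in> \<sigma> \<Longrightarrow> y \<in> \<sigma> \<Longrightarrow> x + y \<in> \<sigma>" using cc by (simp add: convex_cone_iff)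
lemma scale_in: "x \<in> \<sigma> \<Longrightarrow> 0 \<le> c \<Longrightarrow> c *\<^sub>R x \<in> \<sigma>" using cc by (simp add: convex_cone_iff)
lemma convex_sig: "convex \<sigma>" using cc by (simp add: convex_cone_def)

lemma sum_in:
  assumes "finite I" "\<And>i. i \<in> I \<Longrightarrow> 0 \<le> c i \<and> u i \<in> \<sigma>"
  shows "(\<Sum>i\<in>I. c i *\<^sub>R u i) \<in> \<sigma>"
  using assms
proof (induction I rule: finite_induct)
  case empty then show ?case by (simp add: zero_in)
next
  case (insert x F) then show ?case by (simp add: add_in scale_in)
qed

lemma pt: "x \<in> \<sigma> \<Longrightarrow> - x \<in> \<sigma> \<Longrightarrow> x = 0"
proof -
  assume "x \<in> \<sigma>" "- x \<in> \<sigma>"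
  then have "x \<in> uminus ` \<sigma>" by (metis image_eqI minus_minus)
  then show "x = 0" using pointed \<open>x \<in> \<sigma>\<close> unfolding strongly_convex_def by blast
qed

lemma sum0: "a \<in> \<sigma> \<Longrightarrow> b \<in> \<sigma> \<Longrightarrow> a + b = 0 \<Longrightarrow> a = 0"
  by (metis add.commute add_eq_0_iff pt)

lemma poly: "polyhedron \<sigma>"
  using sig_hull polyhedron_convex_cone_hull finS0 by simp

lemma ineqs: obtains H where "finite H" "0 \<notin> H" "\<sigma> = {x. \<forall>h\<in>H. 0 \<le> h \<bullet> x}"
proof -
  obtain F where F: "finite F" "\<sigma> = \<Inter> F" "\<forall>h\<in>F. \<exists>a b. a \<noteq> 0 \<and> h = {x. a \<bullet> x \<le> b}"
    using poly unfolding polyhedron_def by blast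
  then obtain a b where ab: "\<forall>h\<in>F. a h \<noteq> 0 \<and> h = {x. a h \<bullet> x \<le> b h}"
    by metis
  have b0: "0 \<le> b h" if "h \<in> F" for h
  proof -
    have "0 \<in> h" using zero_in F(2) that by auto
    moreover have "h = {x. a h \<bullet> x \<le> b h}" using ab that by auto
    ultimately have "a h \<bullet> 0 \<le> b h" by blast
    then show ?thesis by simp
  qed
  have eq: "\<sigma> = {x. \<forall>h\<in>F. a h \<bullet> x \<le> 0}"
  proof (intro set_eqI iffI)
    fix x assume x: "x \<in> \<sigma>"
    show "x \<in> {x. \<forall>h\<in>F. a h \<bullet> x \<le> 0}"
    proof (clarsimp)
      fix h assume h: "h \<in> F"
      show "a h \<bullet> x \<le> 0"
      proof (rule ccontr)
        assume "\<not> a h \<bullet> x \<le> 0"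
        then have pos: "a h \<bullet> x > 0" by simp
        define t where "t = (\<bar>b h\<bar> + 1) / (a h \<bullet> x)"
        have "t > 0" using pos by (simp add: t_def add_pos_nonneg)
        then have "t *\<^sub>R x \<in> \<sigma>" using x scale_in by simp
        then have "t *\<^sub>R x \<in> h" using F(2) h by auto
        moreover have "h = {x. a h \<bullet> x \<le> b h}" using ab h by auto
        ultimately have "a h \<bullet> (t *\<^sub>R x) \<le> b h" by blast
        moreover have "a h \<bullet> (t *\<^sub>R x) = \<bar>b h\<bar> + 1" using pos by (simp add: t_def)
        ultimately show False by simp
      qed
    qed
  next
    fix x assume "x \<in> {x. \<forall>h\<in>F. a h \<bullet> x \<le> 0}"
    then have "\<forall>h\<in>F. x \<in> h" using ab b0 by force
    then show "x \<in> \<sigma>" using F(2) by auto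
  qed
  show ?thesis
  proof (rule that[of "(\<lambda>h. - a h) ` F"])
    show "finite ((\<lambda>h. - a h) ` F)" using F by simp
    show "0 \<notin> (\<lambda>h. - a h) ` F" using ab by auto
    show "\<sigma> = {x. \<forall>h\<in>(\<lambda>h. - a h) ` F. 0 \<le> h \<bullet> x}" using eq by auto
  qed
qed

lemma interior_ne: "interior \<sigma> \<noteq> {}"
proof -
  have "affine hull \<sigma> = UNIV" using full aff_dim_eq_full[of \<sigma>] by simp
  then have "rel_interior \<sigma> = interior \<sigma>" by (rule rel_interior_interior)
  moreover have "\<sigma> \<noteq> {}" using zero_in by auto
  ultimately show ?thesis using rel_interior_eq_empty[OF convex_sig] by simp
qed

lemma face_scale:
  assumes F: "F face_of \<sigma>" and z: "z \<in> F" and t: "0 \<le> t"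
  shows "t *\<^sub>R z \<in> F"
proof (cases "z = 0")
  case True then show ?thesis using z by simp
next
  case False
  have zs: "z \<in> \<sigma>" using F z face_of_imp_subset by blast
  have conv: "convex F" using F face_of_imp_convex by blast
  have big: "c *\<^sub>R z \<in> F \<and> 0 \<in> F" if "c > 1" for c
  proof -
    have "z \<in> open_segment 0 (c *\<^sub>R z)"
      unfolding in_segment
    proof (intro conjI exI[where x="1/c"])
      show "0 \<noteq> c *\<^sub>R z" using False that by simp
    qed (use that in auto)
    then show ?thesis using face_ofD[OF F _ zero_in scale_in[OF zs]] z that by auto
  qed
  show ?thesis
  proof (cases "t > 1")
    case True then show ?thesis using big by blast
  next
    case False
    have "0 \<in> F" using big[of 2] by simp
    have "t *\<^sub>R z = (1 - t) *\<^sub>R 0 + t *\<^sub>R z" by simp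
    also have "\<dots> \<in> F" using conv \<open>0 \<in> F\<close> z t False
      by (intro convexD) auto
    finally show ?thesis .
  qed
qed

lemma face_add:
  assumes F: "F face_of \<sigma>" and a: "a \<in> \<sigma>" and b: "b \<in> \<sigma>" and ab: "a + b \<in> F"
  shows "a \<in> F"
proof (cases "a = b")
  case True
  have "(1/2) *\<^sub>R (a + b) \<in> F" using face_scale[OF F ab] by simp
  moreover have "(1/2) *\<^sub>R (a + b) = a" using True by (simp add: scaleR_2[symmetric])
  ultimately show ?thesis by simp
next
  case False
  have "a + b \<in> open_segment (2 *\<^sub>R a) (2 *\<^sub>R b)"
    unfolding in_segment
  proof (intro conjI exI[where x="1/2"])
    show "2 *\<^sub>R a \<noteq> 2 *\<^sub>R b" using False by simp
  qed (auto simp: algebra_simps)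
  then have "2 *\<^sub>R a \<in> F" using face_ofD[OF F _ scale_in[OF a] scale_in[OF b] ab] by auto
  then have "(1/2) *\<^sub>R (2 *\<^sub>R a) \<in> F" by (rule face_scale[OF F]) simp
  then show ?thesis by simp
qed

lemma face_sum:
  assumes F: "F face_of \<sigma>" and fin: "finite I" and cu: "\<And>i. i \<in> I \<Longrightarrow> 0 \<le> c i \<and> u i \<in> \<sigma>"
    and inF: "(\<Sum>i\<in>I. c i *\<^sub>R u i) \<in> F" and k: "k \<in> I" and ck: "0 < c k"
  shows "u k \<in> F"
proof -
  have "(\<Sum>i\<in>I. c i *\<^sub>R u i) = c k *\<^sub>R u k + (\<Sum>i\<in>I-{k}. c i *\<^sub>R u i)"
    using fin k by (simp add: sum.remove)
  moreover have "(\<Sum>i\<in>I-{k}. c i *\<^sub>R u i) \<in> \<sigma>" using fin cu by (intro sum_in) auto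
  moreover have "c k *\<^sub>R u k \<in> \<sigma>" using cu k scale_in by auto
  ultimately have "c k *\<^sub>R u k \<in> F" using face_add[OF F] inF by metis
  then have "(1 / c k) *\<^sub>R (c k *\<^sub>R u k) \<in> F" by (rule face_scale[OF F]) (use ck in simp)
  moreover have "(1 / c k) *\<^sub>R (c k *\<^sub>R u k) = u k" using ck by simp
  ultimately show ?thesis by simp
qed

end

lemma aff_dim_hray:
  fixes s :: "'a::euclidean_space"
  assumes "s \<noteq> 0" shows "aff_dim (hray s) = 1"
proof -
  have "0 \<in> affine hull (hray s)" by (simp add: hull_inc hray_zero)
  then have "aff_dim (hray s) = int (dim ((+) (- 0) ` hray s))" by (rule aff_dim_eq_dim)
  also have "(+) (- 0) ` hray s = hray s" by simp
  finally have e: "aff_dim (hray s) = int (dim (hray s))" .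
  have "span (hray s) = span {s}"
  proof
    show "span (hray s) \<subseteq> span {s}"
      by (rule span_minimal) (auto simp: hray_def intro: span_mul span_base)
    show "span {s} \<subseteq> span (hray s)"
      by (rule span_mono) (simp add: hray_self)
  qed
  then have "dim (hray s) = dim {s}" by (rule span_eq_dim)
  then show ?thesis using e assms by simp
qed

context rcone begin

lemma hray_sub: "s \<in> \<sigma> \<Longrightarrow> hray s \<subseteq> \<sigma>"
  by (auto simp: hray_def intro: scale_in)

lemma convex_hray: "convex (hray s)"
proof (rule convexI)
  fix x y and u v :: real assume "x \<in> hray s" "y \<in> hray s" "0 \<le> u" "0 \<le> v" "u + v = 1"
  then obtain t1 t2 where "0 \<le> t1" "x = t1 *\<^sub>R s" "0 \<le> t2" "y = t2 *\<^sub>R s" by (auto simp: hray_def)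
  then have "u *\<^sub>R x + v *\<^sub>R y = (u * t1 + v * t2) *\<^sub>R s" by (simp add: algebra_simps)
  moreover have "0 \<le> u * t1 + v * t2" using \<open>0 \<le> t1\<close> \<open>0 \<le> t2\<close> \<open>0 \<le> u\<close> \<open>0 \<le> v\<close> by simp
  ultimately show "u *\<^sub>R x + v *\<^sub>R y \<in> hray s" using hray_mem by metis
qed

lemma ray_of_face:
  assumes F: "\<rho> face_of \<sigma>" and d: "aff_dim \<rho> = 1"
  shows "\<exists>s\<in>S0. s \<noteq> 0 \<and> \<rho> = hray s"
proof -
  have "\<rho> \<noteq> {}" using d by auto
  have "\<exists>y\<in>\<rho>. y \<noteq> 0"
  proof (rule ccontr)
    assume "\<not> (\<exists>y\<in>\<rho>. y \<noteq> 0)"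
    then have "\<rho> = {0}" using \<open>\<rho> \<noteq> {}\<close> by auto
    then show False using d by simp
  qed
  then obtain y where y: "y \<in> \<rho>" "y \<noteq> 0" by blast
  have ys: "y \<in> \<sigma>" using y F face_of_imp_subset by blast
  then obtain c where c: "\<forall>v\<in>S0. 0 \<le> c v" "y = (\<Sum>v\<in>S0. c v *\<^sub>R v)"
    using sig unfolding gen_cone_def by auto
  have "\<exists>s\<in>S0. c s *\<^sub>R s \<noteq> 0"
  proof (rule ccontr)
    assume "\<not> (\<exists>s\<in>S0. c s *\<^sub>R s \<noteq> 0)"
    then have "\<forall>v\<in>S0. c v *\<^sub>R v = 0" by blast
    then have "y = 0" using c by (simp add: sum.neutral)
    then show False using y by simp
  qed
  then obtain s where s: "s \<in> S0" "c s *\<^sub>R s \<noteq> 0" by blast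
  have cs: "0 < c s" using s c by (metis less_eq_real_def scale_zero_left)
  have S0s: "S0 \<subseteq> \<sigma>" using sig gen_cone_mem finS0 by auto
  have sr: "s \<in> \<rho>"
    using face_sum[OF F finS0, of c "\<lambda>v. v"] c S0s s cs y by auto
  have s0: "s \<noteq> 0" using s by auto
  have "\<rho> = hray s"
  proof
    show "hray s \<subseteq> \<rho>" using face_scale[OF F sr] by (auto simp: hray_def)
    show "\<rho> \<subseteq> hray s"
    proof
      fix z assume z: "z \<in> \<rho>"
      have zs: "z \<in> \<sigma>" using z F face_of_imp_subset by blast
      have "z \<in> span {s}"
      proof (rule ccontr)
        assume nz: "z \<notin> span {s}"
        have "independent {s}" using s0 by simp
        then have ind: "independent {z, s}" using nz by (simp add: independent_insertI)
        have "0 \<in> \<rho>" using face_scale[OF F sr, of 0] by simp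
        then have "0 \<in> affine hull \<rho>" by (simp add: hull_inc)
        then have "aff_dim \<rho> = int (dim ((+) (- 0) ` \<rho>))" by (rule aff_dim_eq_dim)
        then have "aff_dim \<rho> = int (dim \<rho>)" by simp
        moreover have "card {z, s} \<le> dim \<rho>"
          using independent_card_le_dim[of "{z,s}" \<rho>] ind z sr by auto
        moreover have "z \<noteq> s" using nz span_base[of s "{s}"] by blast
        then have "card {z, s} = 2" by simp
        ultimately show False using d by simp
      qed
      then obtain t where t: "z = t *\<^sub>R s" by (auto simp: span_singleton)
      show "z \<in> hray s"
      proof (cases "0 \<le> t")
        case True then show ?thesis using t hray_mem by simp
      next
        case False
        have "- z = (- t) *\<^sub>R s" using t by simp
        moreover have "s \<in> \<sigma>" using S0s s by auto
        ultimately have "- z \<in> \<sigma>" using False scale_in[of s "- t"] by simp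
        then have "z = 0" using pt zs by simp
        then show ?thesis using hray_zero by simp
      qed
    qed
  qed
  then show ?thesis using s s0 by blast
qed

lemma hray_face:
  assumes fin: "finite S" and Ss: "S \<subseteq> \<sigma>" and sh: "\<sigma> = convex_cone hull S" and sS: "s \<in> S"
    and s0: "s \<noteq> 0" and nh: "s \<notin> convex_cone hull (S - {s})"
  shows "hray s face_of \<sigma>"
  unfolding face_of_def
proof (intro conjI ballI impI)
  have ss: "s \<in> \<sigma>" using Ss sS by auto
  show "hray s \<subseteq> \<sigma>" using hray_sub ss .
  show "convex (hray s)" by (rule convex_hray)
  let ?C = "convex_cone hull (S - {s})"
  have Cs: "?C \<subseteq> \<sigma>" using sh by (simp add: hull_mono subset_insertI2)
  have split: "\<exists>\<alpha> a'. 0 \<le> \<alpha> \<and> a' \<in> ?C \<and> a = \<alpha> *\<^sub>R s + a'" if "a \<in> \<sigma>" for a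
  proof -
    have "a \<in> gen_cone S" using that sh gen_cone_eq[OF fin] by simp
    then obtain c where c: "\<forall>v\<in>S. 0 \<le> c v" "a = (\<Sum>v\<in>S. c v *\<^sub>R v)"
      unfolding gen_cone_def by blast
    have "a = c s *\<^sub>R s + (\<Sum>v\<in>S-{s}. c v *\<^sub>R v)" using c fin sS by (simp add: sum.remove)
    moreover have "(\<Sum>v\<in>S-{s}. c v *\<^sub>R v) \<in> ?C"
      using gen_cone_eq[of "S-{s}"] fin c unfolding gen_cone_def by auto
    ultimately show ?thesis using c sS by blast
  qed
  fix a b x assume a: "a \<in> \<sigma>" and b: "b \<in> \<sigma>" and x: "x \<in> hray s" and seg: "x \<in> open_segment a b"
  obtain t where t: "0 \<le> t" "x = t *\<^sub>R s" using x by (auto simp: hray_def)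
  obtain u where u: "0 < u" "u < 1" "x = (1 - u) *\<^sub>R a + u *\<^sub>R b" using seg by (auto simp: in_segment)
  obtain \<alpha> a' where aa: "0 \<le> \<alpha>" "a' \<in> ?C" "a = \<alpha> *\<^sub>R s + a'" using split[OF a] by blast
  obtain \<beta> b' where bb: "0 \<le> \<beta>" "b' \<in> ?C" "b = \<beta> *\<^sub>R s + b'" using split[OF b] by blast
  define \<gamma> where "\<gamma> = (1 - u) * \<alpha> + u * \<beta>"
  define c' where "c' = (1 - u) *\<^sub>R a' + u *\<^sub>R b'"
  have c'C: "c' \<in> ?C" unfolding c'_def using aa bb u
    by (intro convex_cone_hull_add convex_cone_hull_mul) auto
  have eq: "t *\<^sub>R s = \<gamma> *\<^sub>R s + c'"
    using t u aa bb by (simp add: \<gamma>_def c'_def algebra_simps)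
  have "\<not> t > \<gamma>"
  proof
    assume "t > \<gamma>"
    have "c' = (t - \<gamma>) *\<^sub>R s" using eq by (simp add: algebra_simps)
    then have "s = (1 / (t - \<gamma>)) *\<^sub>R c'" using \<open>t > \<gamma>\<close> by simp
    then have "s \<in> ?C" using c'C \<open>t > \<gamma>\<close> by (simp add: convex_cone_hull_mul)
    then show False using nh by simp
  qed
  then have "c' + (\<gamma> - t) *\<^sub>R s = 0" using eq by (simp add: algebra_simps)
  moreover have "(\<gamma> - t) *\<^sub>R s \<in> \<sigma>" using \<open>\<not> t > \<gamma>\<close> ss scale_in by simp
  ultimately have "c' = 0" using sum0 c'C Cs by blast
  have a'0: "a' = 0"
  proof -
    have "(1 - u) *\<^sub>R a' + u *\<^sub>R b' = 0" using \<open>c' = 0\<close> c'_def by simp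
    moreover have "(1 - u) *\<^sub>R a' \<in> \<sigma>" "u *\<^sub>R b' \<in> \<sigma>" using aa bb u Cs scale_in by auto
    ultimately have "(1 - u) *\<^sub>R a' = 0" using sum0 by blast
    then show ?thesis using u by simp
  qed
  have b'0: "b' = 0"
  proof -
    have "u *\<^sub>R b' + (1 - u) *\<^sub>R a' = 0" using \<open>c' = 0\<close> c'_def by (simp add: add.commute)
    moreover have "(1 - u) *\<^sub>R a' \<in> \<sigma>" "u *\<^sub>R b' \<in> \<sigma>" using aa bb u Cs scale_in by auto
    ultimately have "u *\<^sub>R b' = 0" using sum0 by blast
    then show ?thesis using u by simp
  qed
  show "a \<in> hray s" using aa a'0 hray_mem by simp
  show "b \<in> hray s" using bb b'0 hray_mem by simp
qed

definition G0 where "G0 = {s. s \<noteq> 0 \<and> hray s \<in> rays \<sigma>}"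

lemma gen_rays_aux:
  "\<forall>S. finite S \<and> S \<subseteq> \<sigma> \<and> \<sigma> = convex_cone hull S \<and> card S = N \<longrightarrow> \<sigma> \<subseteq> convex_cone hull G0"
proof (induction N rule: less_induct)
  case (less N)
  show ?case
  proof (intro allI impI)
    fix S assume S: "finite S \<and> S \<subseteq> \<sigma> \<and> \<sigma> = convex_cone hull S \<and> card S = N"
    show "\<sigma> \<subseteq> convex_cone hull G0"
    proof (cases "\<exists>s\<in>S. s \<noteq> 0 \<and> s \<in> convex_cone hull (S - {s})")
      case True
      then obtain s where s: "s \<in> S" "s \<noteq> 0" "s \<in> convex_cone hull (S - {s})" by blast
      have "\<sigma> = convex_cone hull (S - {s})"
      proof
        show "convex_cone hull (S - {s}) \<subseteq> \<sigma>" using S by (metis Diff_subset hull_mono)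
        have "S \<subseteq> convex_cone hull (S - {s})" using s by (auto intro: hull_inc)
        then show "\<sigma> \<subseteq> convex_cone hull (S - {s})" using S
          by (metis convex_cone_convex_cone_hull hull_minimal)
      qed
      moreover have "card (S - {s}) < N" using S s by (meson card_Diff1_less)
      moreover have "finite (S - {s})" "S - {s} \<subseteq> \<sigma>" using S by auto
      ultimately show ?thesis using less.IH[of "card (S - {s})"] by blast
    next
      case False
      have "S \<subseteq> convex_cone hull G0"
      proof
        fix s assume sS: "s \<in> S"
        show "s \<in> convex_cone hull G0"
        proof (cases "s = 0")
          case True then show ?thesis by (simp add: convex_cone_hull_contains_0)
        next
          case s0: False
          then have "s \<notin> convex_cone hull (S - {s})" using False sS by blast
          then have "hray s face_of \<sigma>" using hray_face S sS s0 by blast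
          then have "s \<in> G0" using aff_dim_hray[OF s0] s0 by (simp add: G0_def rays_def)
          then show ?thesis by (simp add: hull_inc)
        qed
      qed
      then show ?thesis using S by (metis convex_cone_convex_cone_hull hull_minimal)
    qed
  qed
qed

lemma gen_rays: "\<sigma> \<subseteq> convex_cone hull G0"
proof -
  have "S0 \<subseteq> \<sigma>" using sig gen_cone_mem finS0 by auto
  then show ?thesis using gen_rays_aux[of "card S0"] sig_hull finS0 by blast
qed

lemma rays_finite: "finite (rays \<sigma>)"
proof -
  have "rays \<sigma> \<subseteq> hray ` S0"
    using ray_of_face by (auto simp: rays_def)
  then show ?thesis using finS0 finite_subset by blast
qed

end

lemma lattice_diff: "lattice_pt a \<Longrightarrow> lattice_pt b \<Longrightarrow> lattice_pt (a - b)"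
  by (auto simp: lattice_pt_def)
lemma lattice_int_scale: "lattice_pt a \<Longrightarrow> lattice_pt (of_int k *\<^sub>R a)"
  by (auto simp: lattice_pt_def)

lemma prim_gen_hray:
  fixes s :: "real^'n"
  assumes lat: "lattice_pt s" and s0: "s \<noteq> 0"
  shows "\<exists>t0>0. prim_gen (hray s) = t0 *\<^sub>R s \<and> lattice_pt (t0 *\<^sub>R s)"
proof -
  obtain i where si: "s $ i \<noteq> 0" using s0 by (metis vec_eq_iff zero_index)
  define G where "G = {t::real. lattice_pt (t *\<^sub>R s)}"
  have Gint: "t * s $ i \<in> \<int>" if "t \<in> G" for t
    using that by (auto simp: G_def lattice_pt_def)
  define M where "M = \<lceil>\<bar>s $ i\<bar>\<rceil>"
  define Fin where "Fin = {t\<in>G. 0 < t \<and> t \<le> 1}"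
  have "Fin \<subseteq> (\<lambda>j::int. of_int j / s $ i) ` {-M..M}"
  proof
    fix t assume t: "t \<in> Fin"
    then obtain j where j: "t * s $ i = of_int j" using Gint Fin_def by (auto elim: Ints_cases)
    have "\<bar>t * s $ i\<bar> \<le> \<bar>s $ i\<bar>" using t by (auto simp: Fin_def abs_mult mult_left_le_one_le)
    then have "\<bar>of_int j\<bar> \<le> \<bar>s $ i\<bar>" using j by simp
    then have "\<bar>j\<bar> \<le> M" unfolding M_def by linarith
    moreover have "t = of_int j / s $ i" using j si by (simp add: field_simps)
    moreover have "j \<in> {-M..M}" using \<open>\<bar>j\<bar> \<le> M\<close> by auto
    ultimately show "t \<in> (\<lambda>j::int. of_int j / s $ i) ` {-M..M}" by (intro image_eqI) auto
  qed
  then have finF: "finite Fin" by (rule finite_subset) simp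
  have oneF: "1 \<in> Fin" using lat by (simp add: Fin_def G_def)
  define t0 where "t0 = Min Fin"
  have t0F: "t0 \<in> Fin" using finF oneF unfolding t0_def by (intro Min_in) auto
  have t0pos: "0 < t0" and t0G: "t0 \<in> G" and t01: "t0 \<le> 1" using t0F by (auto simp: Fin_def)
  have t0min: "t0 \<le> t" if "t \<in> G" "0 < t" for t
  proof (cases "t \<le> 1")
    case True then have "t \<in> Fin" using that by (simp add: Fin_def)
    then show ?thesis using finF by (simp add: t0_def)
  next
    case False then show ?thesis using t01 by simp
  qed
  have mult: "\<exists>k::nat. t = real k * t0" if "t \<in> G" "0 \<le> t" for t
  proof -
    define k where "k = \<lfloor>t / t0\<rfloor>"
    have k0: "0 \<le> k" using that t0pos by (simp add: k_def)
    define r where "r = t - of_int k * t0"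
    have "r *\<^sub>R s = t *\<^sub>R s - of_int k *\<^sub>R (t0 *\<^sub>R s)" by (simp add: r_def algebra_simps)
    moreover have "lattice_pt (t *\<^sub>R s - of_int k *\<^sub>R (t0 *\<^sub>R s))"
      using that t0G by (intro lattice_diff lattice_int_scale) (auto simp: G_def)
    ultimately have rG: "r \<in> G" by (simp add: G_def)
    have "of_int k \<le> t / t0" "t / t0 < of_int k + 1" unfolding k_def by linarith+
    then have "of_int k * t0 \<le> t" "t < (of_int k + 1) * t0" using t0pos by (simp_all add: field_simps)
    then have r0: "0 \<le> r" "r < t0" by (simp_all add: r_def algebra_simps)
    have "r = 0"
    proof (rule ccontr)
      assume "r \<noteq> 0"
      then have "t0 \<le> r" using t0min rG r0 by simp
      then show False using r0 by simp
    qed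
    then have "t = real (nat k) * t0" using k0 by (simp add: r_def)
    then show ?thesis by blast
  qed
  define v where "v = t0 *\<^sub>R s"
  have vlat: "lattice_pt v" using t0G by (simp add: G_def v_def)
  have Pv: "v \<in> hray s \<and> lattice_pt v \<and> v \<noteq> 0 \<and> (\<forall>w\<in>hray s. lattice_pt w \<longrightarrow> (\<exists>k::nat. w = real k *\<^sub>R v))"
  proof (intro conjI ballI impI)
    show "v \<in> hray s" using t0pos by (simp add: v_def hray_mem)
    show "lattice_pt v" by (rule vlat)
    show "v \<noteq> 0" using t0pos s0 by (simp add: v_def)
    fix w assume "w \<in> hray s" "lattice_pt w"
    then obtain t where t: "0 \<le> t" "w = t *\<^sub>R s" by (auto simp: hray_def)
    then have "t \<in> G" using \<open>lattice_pt w\<close> by (simp add: G_def)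
    then obtain k :: nat where "t = real k * t0" using mult t by blast
    then show "\<exists>k::nat. w = real k *\<^sub>R v" using t by (auto simp: v_def)
  qed
  have uniq: "v' = v" if P': "v' \<in> hray s \<and> lattice_pt v' \<and> v' \<noteq> 0 \<and> (\<forall>w\<in>hray s. lattice_pt w \<longrightarrow> (\<exists>k::nat. w = real k *\<^sub>R v'))" for v'
  proof -
    obtain k :: nat where k: "v' = real k *\<^sub>R v" using Pv P' by blast
    obtain k' :: nat where k': "v = real k' *\<^sub>R v'" using Pv P' by blast
    have "v = real k' *\<^sub>R v'" by (rule k')
    also have "\<dots> = real k' *\<^sub>R (real k *\<^sub>R v)" by (simp only: k)
    also have "\<dots> = (real k' * real k) *\<^sub>R v" by simp
    finally have "v = (real k' * real k) *\<^sub>R v" .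
    then have "(real k' * real k - 1) *\<^sub>R v = 0" by (simp add: algebra_simps)
    then have "real k' * real k = 1" using Pv by simp
    then have "k' * k = 1" by (metis of_nat_1 of_nat_eq_iff of_nat_mult)
    then have "k = 1" by simp
    then show ?thesis using k by simp
  qed
  have "prim_gen (hray s) = v"
    unfolding prim_gen_def
  proof (rule the_equality)
    show "v \<in> hray s \<and> lattice_pt v \<and> v \<noteq> 0 \<and> (\<forall>w\<in>hray s. lattice_pt w \<longrightarrow> (\<exists>k::nat. w = real k *\<^sub>R v))"
      by (rule Pv)
  next
    fix v' assume "v' \<in> hray s \<and> lattice_pt v' \<and> v' \<noteq> 0 \<and> (\<forall>w\<in>hray s. lattice_pt w \<longrightarrow> (\<exists>k::nat. w = real k *\<^sub>R v'))"
    then show "v' = v" by (rule uniq)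
  qed
  moreover have "lattice_pt (t0 *\<^sub>R s)" using vlat by (simp add: v_def)
  ultimately show ?thesis using t0pos unfolding v_def by blast
qed

context rcone begin

lemma S0_sub: "S0 \<subseteq> \<sigma>" using sig gen_cone_mem finS0 by auto

lemma g_props:
  assumes "\<rho> \<in> rays \<sigma>"
  shows "prim_gen \<rho> \<noteq> 0 \<and> prim_gen \<rho> \<in> \<sigma> \<and> hray (prim_gen \<rho>) = \<rho>"
proof -
  obtain s where s: "s \<in> S0" "s \<noteq> 0" "\<rho> = hray s"
    using ray_of_face assms by (auto simp: rays_def)
  obtain t0 where t0: "t0 > 0" "prim_gen (hray s) = t0 *\<^sub>R s"
    using prim_gen_hray[of s] s latS0 by blast
  have "s \<in> \<sigma>" using s S0_sub by auto
  then show ?thesis using s t0 scale_in[of s t0] hray_scale[of t0 s] by auto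
qed

lemma g_inj: "inj_on prim_gen (rays \<sigma>)"
  by (rule inj_onI) (metis g_props)

lemma gen_g:
  assumes "y \<in> \<sigma>"
  shows "\<exists>c. (\<forall>\<rho>\<in>rays \<sigma>. 0 \<le> c \<rho>) \<and> y = (\<Sum>\<rho>\<in>rays \<sigma>. c \<rho> *\<^sub>R prim_gen \<rho>)"
proof -
  have "G0 \<subseteq> convex_cone hull (prim_gen ` rays \<sigma>)"
  proof
    fix s assume "s \<in> G0"
    then have r: "hray s \<in> rays \<sigma>" and s0: "s \<noteq> 0" by (auto simp: G0_def)
    then have "s \<in> hray (prim_gen (hray s))" using g_props[OF r] hray_self by simp
    then obtain t where t: "0 \<le> t" "s = t *\<^sub>R prim_gen (hray s)" by (auto simp: hray_def)
    have "prim_gen (hray s) \<in> convex_cone hull (prim_gen ` rays \<sigma>)" using r by (simp add: hull_inc)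
    then have "t *\<^sub>R prim_gen (hray s) \<in> convex_cone hull (prim_gen ` rays \<sigma>)"
      by (rule convex_cone_hull_mul) (rule t(1))
    then show "s \<in> convex_cone hull (prim_gen ` rays \<sigma>)" by (subst t(2))
  qed
  then have "convex_cone hull G0 \<subseteq> convex_cone hull (prim_gen ` rays \<sigma>)"
    using convex_cone_convex_cone_hull by (rule hull_minimal)
  then have "\<sigma> \<subseteq> convex_cone hull (prim_gen ` rays \<sigma>)" by (rule order_trans[OF gen_rays])
  then have "y \<in> convex_cone hull (prim_gen ` rays \<sigma>)" using assms by blast
  moreover have "finite (prim_gen ` rays \<sigma>)" using rays_finite by simp
  ultimately have "y \<in> gen_cone (prim_gen ` rays \<sigma>)" using gen_cone_eq by blast
  then obtain c where c: "\<forall>u\<in>prim_gen ` rays \<sigma>. 0 \<le> c u" "y = (\<Sum>u\<in>prim_gen ` rays \<sigma>. c u *\<^sub>R u)"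
    unfolding gen_cone_def by blast
  have "y = (\<Sum>\<rho>\<in>rays \<sigma>. c (prim_gen \<rho>) *\<^sub>R prim_gen \<rho>)"
    using c(2) sum.reindex[OF g_inj, of "\<lambda>u. c u *\<^sub>R u"] by simp
  then show ?thesis using c(1) by (intro exI[where x="\<lambda>\<rho>. c (prim_gen \<rho>)"]) auto
qed

lemma rays_sub: "\<rho> \<in> rays \<sigma> \<Longrightarrow> \<rho> \<subseteq> \<sigma>"
  unfolding rays_def using face_of_imp_subset by blast

lemma Xi_down: "\<Upsilon> \<in> Xi \<sigma> \<Longrightarrow> \<Upsilon>' \<subseteq> \<Upsilon> \<Longrightarrow> \<Upsilon>' \<in> Xi \<sigma>"
proof -
  assume a: "\<Upsilon> \<in> Xi \<sigma>" "\<Upsilon>' \<subseteq> \<Upsilon>"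
  have U: "\<Upsilon> \<subseteq> rays \<sigma>" "min_face \<sigma> \<Upsilon> \<noteq> \<sigma>" using a(1) by (simp_all add: Xi_def)
  have "{F. F face_of \<sigma> \<and> \<Upsilon> \<subseteq> {\<rho>\<in>rays \<sigma>. \<rho> \<subseteq> F}} \<subseteq> {F. F face_of \<sigma> \<and> \<Upsilon>' \<subseteq> {\<rho>\<in>rays \<sigma>. \<rho> \<subseteq> F}}"
    using a(2) by blast
  then have m1: "min_face \<sigma> \<Upsilon>' \<subseteq> min_face \<sigma> \<Upsilon>"
    unfolding min_face_def by (rule Inter_anti_mono)
  have "\<sigma> \<in> {F. F face_of \<sigma> \<and> \<Upsilon> \<subseteq> {\<rho>\<in>rays \<sigma>. \<rho> \<subseteq> F}}"
    using U(1) rays_sub face_of_refl[OF convex_sig] by blast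
  then have m2: "min_face \<sigma> \<Upsilon> \<subseteq> \<sigma>" unfolding min_face_def by (rule Inter_lower)
  have "min_face \<sigma> \<Upsilon>' \<noteq> \<sigma>"
  proof
    assume "min_face \<sigma> \<Upsilon>' = \<sigma>"
    then have "min_face \<sigma> \<Upsilon> = \<sigma>" using m1 m2 by blast
    then show False using U(2) by simp
  qed
  moreover have "\<Upsilon>' \<subseteq> rays \<sigma>" using a(2) U(1) by blast
  ultimately show ?thesis by (simp add: Xi_def)
qed

lemma Xi_face:
  assumes "\<Upsilon> \<in> Xi \<sigma>"
  shows "\<exists>F. F face_of \<sigma> \<and> F \<noteq> \<sigma> \<and> (\<forall>\<rho>\<in>\<Upsilon>. \<rho> \<subseteq> F)"
proof (rule ccontr)
  assume nF: "\<not> ?thesis"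
  let ?Fam = "{F. F face_of \<sigma> \<and> \<Upsilon> \<subseteq> {\<rho>\<in>rays \<sigma>. \<rho> \<subseteq> F}}"
  have allF: "F = \<sigma>" if "F \<in> ?Fam" for F
  proof (rule ccontr)
    assume "F \<noteq> \<sigma>"
    moreover have "F face_of \<sigma>" "\<forall>\<rho>\<in>\<Upsilon>. \<rho> \<subseteq> F" using that by auto
    ultimately show False using nF by blast
  qed
  have U: "\<Upsilon> \<subseteq> rays \<sigma>" using assms by (simp add: Xi_def)
  have "\<forall>\<rho>\<in>\<Upsilon>. \<rho> \<subseteq> \<sigma>"
  proof
    fix \<rho> assume "\<rho> \<in> \<Upsilon>"
    then have "\<rho> face_of \<sigma>" using U by (auto simp: rays_def)
    then show "\<rho> \<subseteq> \<sigma>" by (rule face_of_imp_subset)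
  qed
  then have "\<sigma> \<in> ?Fam" using U face_of_refl[OF convex_sig] by blast
  then have "?Fam = {\<sigma>}" using allF by blast
  then have "min_face \<sigma> \<Upsilon> = \<sigma>" unfolding min_face_def by simp
  then show False using assms by (simp add: Xi_def)
qed

lemma face_Xi:
  assumes "F face_of \<sigma>" "F \<noteq> \<sigma>" "\<Upsilon> \<subseteq> rays \<sigma>" "\<forall>\<rho>\<in>\<Upsilon>. \<rho> \<subseteq> F"
  shows "\<Upsilon> \<in> Xi \<sigma>"
proof -
  have "min_face \<sigma> \<Upsilon> \<subseteq> F" unfolding min_face_def using assms by blast
  moreover have "F \<subseteq> \<sigma>" using assms face_of_imp_subset by blast
  ultimately have "min_face \<sigma> \<Upsilon> \<noteq> \<sigma>" using assms(2) by blast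
  then show ?thesis using assms by (simp add: Xi_def)
qed

end

lemma prod_pos_iff:
  fixes f :: "'a \<Rightarrow> real"
  assumes "finite A" "\<And>a. a \<in> A \<Longrightarrow> 0 \<le> f a"
  shows "0 < prod f A \<longleftrightarrow> (\<forall>a\<in>A. f a \<noteq> 0)"
proof
  assume "0 < prod f A"
  then have "prod f A \<noteq> 0" by simp
  then show "\<forall>a\<in>A. f a \<noteq> 0" using assms(1) by simp
next
  assume "\<forall>a\<in>A. f a \<noteq> 0"
  then show "0 < prod f A" using assms by (intro prod_pos) (auto simp: less_le)
qed

locale rsetup = rcone \<sigma> S0 for \<sigma> :: "(real^'n) set" and S0 +
  fixes H :: "(real^'n) set" and P :: "(real^'n) set set" and m :: "real^'n"
  assumes finH: "finite H" and H0: "0 \<notin> H" and sigH: "\<sigma> = {x. \<forall>h\<in>H. 0 \<le> h \<bullet> x}"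
    and PV: "P \<subseteq> rays \<sigma>" and Pne: "P \<noteq> {}" and PnV: "P \<noteq> rays \<sigma>"
    and mneg: "\<forall>v\<in>P. m \<bullet> prim_gen v < 0" and mpos: "\<forall>v\<in>rays \<sigma> - P. 0 < m \<bullet> prim_gen v"
begin

lemma hnn: "y \<in> \<sigma> \<Longrightarrow> h \<in> H \<Longrightarrow> 0 \<le> h \<bullet> y"
  using sigH by auto

lemma gV: "v \<in> rays \<sigma> \<Longrightarrow> prim_gen v \<in> \<sigma>" using g_props by blast

lemma int_pt: obtains p where "p \<in> \<sigma>" "\<forall>h\<in>H. 0 < h \<bullet> p"
proof -
  obtain p where p: "p \<in> interior \<sigma>" using interior_ne by blast
  then obtain \<epsilon> where e: "\<epsilon> > 0" "ball p \<epsilon> \<subseteq> \<sigma>" using mem_interior by blast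
  have "0 < h \<bullet> p" if h: "h \<in> H" for h
  proof -
    have hn: "norm h > 0" using h H0 by auto
    define q where "q = p - (\<epsilon> / 2 / norm h) *\<^sub>R h"
    have "dist p q < \<epsilon>" using e hn by (simp add: q_def dist_norm)
    then have "q \<in> \<sigma>" using e by auto
    then have "0 \<le> h \<bullet> q" using hnn h by blast
    moreover have "h \<bullet> q = h \<bullet> p - (\<epsilon> / 2) * norm h"
      using hn by (simp add: q_def inner_diff_right power2_norm_eq_inner[symmetric] power2_eq_square)
    moreover have "0 < (\<epsilon> / 2) * norm h" using e hn by simp
    ultimately show ?thesis by linarith
  qed
  moreover have "p \<in> \<sigma>" using p interior_subset by blast
  ultimately show ?thesis using that by blast
qed

lemma comb_tight:
  assumes c: "\<forall>v\<in>rays \<sigma>. 0 \<le> c v" and h: "h \<in> H"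
    and hy: "h \<bullet> (\<Sum>v\<in>rays \<sigma>. c v *\<^sub>R prim_gen v) = 0" and k: "k \<in> rays \<sigma>" "0 < c k"
  shows "h \<bullet> prim_gen k = 0"
proof -
  have nn: "\<And>v. v \<in> rays \<sigma> \<Longrightarrow> 0 \<le> c v * (h \<bullet> prim_gen v)"
    using c hnn[OF gV h] by simp
  have "(\<Sum>v\<in>rays \<sigma>. c v * (h \<bullet> prim_gen v)) = 0" using hy by (simp add: inner_sum_right)
  then have "\<forall>v\<in>rays \<sigma>. c v * (h \<bullet> prim_gen v) = 0"
    using sum_nonneg_eq_0_iff[OF rays_finite nn] by simp
  then have "c k * (h \<bullet> prim_gen k) = 0" using k by blast
  then show ?thesis using k by simp
qed

lemma h_some_g: "h \<in> H \<Longrightarrow> \<exists>v\<in>rays \<sigma>. 0 < h \<bullet> prim_gen v"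
proof -
  assume h: "h \<in> H"
  obtain p where p: "p \<in> \<sigma>" "\<forall>h\<in>H. 0 < h \<bullet> p" by (rule int_pt)
  obtain c where c: "\<forall>v\<in>rays \<sigma>. 0 \<le> c v" "p = (\<Sum>v\<in>rays \<sigma>. c v *\<^sub>R prim_gen v)"
    using gen_g[OF p(1)] by blast
  have "0 < (\<Sum>v\<in>rays \<sigma>. c v * (h \<bullet> prim_gen v))" using p(2) h c(2) by (simp add: inner_sum_right)
  then obtain v where v: "v \<in> rays \<sigma>" "c v * (h \<bullet> prim_gen v) \<noteq> 0"
    by (metis (no_types, lifting) less_irrefl sum.neutral)
  then show ?thesis using hnn[OF gV[OF v(1)] h] by (metis less_eq_real_def mult_zero_right)
qed

definition phi :: "(real^'n) set \<Rightarrow> real^'n \<Rightarrow> real" where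
  "phi v y = (\<Prod>h\<in>{h\<in>H. 0 < h \<bullet> prim_gen v}. h \<bullet> y)"

lemma phi_nn: "y \<in> \<sigma> \<Longrightarrow> 0 \<le> phi v y"
  unfolding phi_def by (rule prod_nonneg) (auto intro: hnn)

lemma phi_pos:
  assumes y: "y \<in> \<sigma>" and v: "v \<in> rays \<sigma>"
  shows "0 < phi v y \<longleftrightarrow> (\<forall>h\<in>H. h \<bullet> y = 0 \<longrightarrow> h \<bullet> prim_gen v = 0)"
proof -
  have "0 < phi v y \<longleftrightarrow> (\<forall>h\<in>{h\<in>H. 0 < h \<bullet> prim_gen v}. h \<bullet> y \<noteq> 0)"
    unfolding phi_def using finH y by (intro prod_pos_iff) (auto intro: hnn)
  also have "\<dots> \<longleftrightarrow> (\<forall>h\<in>H. h \<bullet> y = 0 \<longrightarrow> h \<bullet> prim_gen v = 0)"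
    using hnn[OF gV[OF v]] by (auto simp: less_le)
  finally show ?thesis .
qed

lemma support_Xi:
  assumes y: "y \<in> \<sigma>" and h0: "h0 \<in> H" "h0 \<bullet> y = 0"
  shows "{v\<in>rays \<sigma>. \<forall>h\<in>H. h \<bullet> y = 0 \<longrightarrow> h \<bullet> prim_gen v = 0} \<in> Xi \<sigma>"
proof -
  define T where "T = {h\<in>H. h \<bullet> y = 0}"
  define F where "F = \<Inter>((\<lambda>h. \<sigma> \<inter> {x. h \<bullet> x = 0}) ` T)"
  have T0: "T \<noteq> {}" using h0 by (auto simp: T_def)
  have Ff: "F face_of \<sigma>" unfolding F_def
  proof (rule face_of_Inter)
    show "(\<lambda>h. \<sigma> \<inter> {x. h \<bullet> x = 0}) ` T \<noteq> {}" using T0 by simp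
    fix G assume "G \<in> (\<lambda>h. \<sigma> \<inter> {x. h \<bullet> x = 0}) ` T"
    then obtain h where h: "h \<in> T" "G = \<sigma> \<inter> {x. h \<bullet> x = 0}" by blast
    have "(\<sigma> \<inter> {x. h \<bullet> x = 0}) face_of \<sigma>"
      using h hnn convex_sig by (intro face_of_Int_supporting_hyperplane_ge) (auto simp: T_def)
    then show "G face_of \<sigma>" using h by simp
  qed
  obtain p where p: "p \<in> \<sigma>" "\<forall>h\<in>H. 0 < h \<bullet> p" by (rule int_pt)
  have "F \<subseteq> \<sigma> \<inter> {x. h0 \<bullet> x = 0}" unfolding F_def using h0 by (auto simp: T_def)
  moreover have "h0 \<bullet> p \<noteq> 0" using p h0 by (metis less_irrefl)
  ultimately have "p \<notin> F" by blast
  then have Fne: "F \<noteq> \<sigma>" using p by blast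
  show ?thesis
  proof (rule face_Xi[OF Ff Fne])
    show "{v\<in>rays \<sigma>. \<forall>h\<in>H. h \<bullet> y = 0 \<longrightarrow> h \<bullet> prim_gen v = 0} \<subseteq> rays \<sigma>" by blast
    show "\<forall>\<rho>\<in>{v\<in>rays \<sigma>. \<forall>h\<in>H. h \<bullet> y = 0 \<longrightarrow> h \<bullet> prim_gen v = 0}. \<rho> \<subseteq> F"
    proof (intro ballI subsetI)
      fix \<rho> x assume \<rho>: "\<rho> \<in> {v\<in>rays \<sigma>. \<forall>h\<in>H. h \<bullet> y = 0 \<longrightarrow> h \<bullet> prim_gen v = 0}" and x: "x \<in> \<rho>"
      have "\<rho> = hray (prim_gen \<rho>)" using g_props \<rho> by auto
      then obtain t where t: "0 \<le> t" "x = t *\<^sub>R prim_gen \<rho>" using x by (auto simp: hray_def)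
      have xs: "x \<in> \<sigma>" using t gV \<rho> scale_in by auto
      show "x \<in> F" unfolding F_def using \<rho> t xs by (auto simp: T_def)
    qed
  qed
qed

lemma face_sum_in:
  assumes F: "F face_of \<sigma>" "F \<noteq> {}" and fin: "finite I" and cu: "\<And>i. i \<in> I \<Longrightarrow> 0 \<le> c i \<and> u i \<in> F"
  shows "(\<Sum>i\<in>I. c i *\<^sub>R u i) \<in> F"
  using fin cu
proof (induction I rule: finite_induct)
  case empty
  obtain z where "z \<in> F" using F by blast
  then show ?case using face_scale[OF F(1), of z 0] by simp
next
  case (insert i I)
  have a: "c i *\<^sub>R u i \<in> F" using insert face_scale[OF F(1)] by simp
  have b: "(\<Sum>i\<in>I. c i *\<^sub>R u i) \<in> F" using insert by simp
  have "(1/2) *\<^sub>R (c i *\<^sub>R u i) + (1/2) *\<^sub>R (\<Sum>i\<in>I. c i *\<^sub>R u i) \<in> F"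
    using a b face_of_imp_convex[OF F(1)] by (intro convexD) auto
  then have "2 *\<^sub>R ((1/2) *\<^sub>R (c i *\<^sub>R u i) + (1/2) *\<^sub>R (\<Sum>i\<in>I. c i *\<^sub>R u i)) \<in> F"
    by (rule face_scale[OF F(1)]) simp
  then show ?case using insert by (simp add: scaleR_add_right)
qed

lemma Xi_tight:
  assumes x: "\<forall>v\<in>rays \<sigma>. 0 \<le> x v" "sum x (rays \<sigma>) = 1" and X: "{v\<in>rays \<sigma>. x v \<noteq> 0} \<in> Xi \<sigma>"
  shows "\<exists>h\<in>H. h \<bullet> (\<Sum>v\<in>rays \<sigma>. x v *\<^sub>R prim_gen v) = 0"
proof -
  obtain F where F: "F face_of \<sigma>" "F \<noteq> \<sigma>" "\<forall>\<rho>\<in>{v\<in>rays \<sigma>. x v \<noteq> 0}. \<rho> \<subseteq> F"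
    using Xi_face[OF X] by blast
  define I where "I = {v\<in>rays \<sigma>. x v \<noteq> 0}"
  have "I \<noteq> {}"
  proof
    assume "I = {}"
    then have "sum x (rays \<sigma>) = 0" by (intro sum.neutral) (auto simp: I_def)
    then show False using x by simp
  qed
  then obtain v0 where v0: "v0 \<in> I" by blast
  have gF: "prim_gen v \<in> F" if "v \<in> I" for v
    using F(3) that g_props[of v] hray_self[of "prim_gen v"] by (auto simp: I_def)
  have Fne: "F \<noteq> {}" using gF v0 by blast
  define y where "y = (\<Sum>v\<in>rays \<sigma>. x v *\<^sub>R prim_gen v)"
  have "y = (\<Sum>v\<in>I. x v *\<^sub>R prim_gen v)"
    unfolding y_def I_def by (rule sum.mono_neutral_right) (auto simp: rays_finite)
  also have "\<dots> \<in> F" using rays_finite x gF by (intro face_sum_in[OF F(1) Fne]) (auto simp: I_def)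
  finally have yF: "y \<in> F" .
  then have yi: "y \<notin> interior \<sigma>" using face_of_disjoint_interior[OF F(1) F(2)] by blast
  show ?thesis
  proof (rule ccontr)
    assume "\<not> ?thesis"
    then have ne: "\<forall>h\<in>H. h \<bullet> y \<noteq> 0" by (simp add: y_def)
    have ysig: "y \<in> \<sigma>" using yF F(1) face_of_imp_subset by blast
    have pos: "\<forall>h\<in>H. 0 < h \<bullet> y"
    proof
      fix h assume h: "h \<in> H"
      then have "0 \<le> h \<bullet> y" "h \<bullet> y \<noteq> 0" using hnn[OF ysig] ne by auto
      then show "0 < h \<bullet> y" by simp
    qed
    define U where "U = (\<Inter>h\<in>H. {z. h \<bullet> z > 0})"
    have "open U" unfolding U_def using finH by (intro open_INT) (auto intro: open_halfspace_gt)
    moreover have "U \<subseteq> \<sigma>" unfolding U_def using sigH by (auto simp: less_le)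
    ultimately have "U \<subseteq> interior \<sigma>" by (simp add: interior_maximal)
    moreover have "y \<in> U" using pos by (simp add: U_def)
    ultimately show False using yi by blast
  qed
qed

lemma m_neg_supp:
  assumes y: "y \<in> \<sigma>" and my: "m \<bullet> y < 0"
  shows "\<exists>v\<in>P. 0 < phi v y"
proof -
  obtain c where c: "\<forall>v\<in>rays \<sigma>. 0 \<le> c v" "y = (\<Sum>v\<in>rays \<sigma>. c v *\<^sub>R prim_gen v)"
    using gen_g[OF y] by blast
  have neg: "(\<Sum>v\<in>rays \<sigma>. c v * (m \<bullet> prim_gen v)) < 0" using my c(2) by (simp add: inner_sum_right)
  have "\<exists>v\<in>rays \<sigma>. c v * (m \<bullet> prim_gen v) < 0"
  proof (rule ccontr)
    assume "\<not> ?thesis"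
    then have "\<forall>v\<in>rays \<sigma>. 0 \<le> c v * (m \<bullet> prim_gen v)" by (simp add: not_less)
    then have "0 \<le> (\<Sum>v\<in>rays \<sigma>. c v * (m \<bullet> prim_gen v))" by (intro sum_nonneg) blast
    then show False using neg by simp
  qed
  then obtain v where v: "v \<in> rays \<sigma>" "c v * (m \<bullet> prim_gen v) < 0" by blast
  have "c v \<noteq> 0" using v(2) by auto
  then have cv: "0 < c v" using c(1) v(1) by (simp add: less_le)
  then have mv: "m \<bullet> prim_gen v < 0" using v by (simp add: mult_less_0_iff)
  have vP: "v \<in> P"
  proof (rule ccontr)
    assume "v \<notin> P"
    then have "0 < m \<bullet> prim_gen v" using mpos v(1) by blast
    then show False using mv by simp
  qed
  have "\<forall>h\<in>H. h \<bullet> y = 0 \<longrightarrow> h \<bullet> prim_gen v = 0"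
    using comb_tight[OF c(1)] c(2) v(1) cv by blast
  then have "0 < phi v y" using phi_pos[OF y v(1)] by blast
  then show ?thesis using vP by blast
qed

end

context rsetup begin

definition alpha where "alpha = (\<Sum>v\<in>rays \<sigma> - P. m \<bullet> prim_gen v)"
definition beta where "beta = - (\<Sum>v\<in>P. m \<bullet> prim_gen v)"
definition ev where "ev = (\<Sum>v\<in>rays \<sigma>. (if v \<in> P then alpha else beta) *\<^sub>R prim_gen v)"

lemma finP: "finite P" using PV rays_finite finite_subset by blast

lemma alpha_pos: "0 < alpha"
proof -
  have "rays \<sigma> - P \<noteq> {}" using PV PnV by blast
  then show ?thesis unfolding alpha_def using rays_finite mpos by (intro sum_pos) auto
qed

lemma beta_pos: "0 < beta"
proof -
  have "0 < (\<Sum>v\<in>P. - (m \<bullet> prim_gen v))" using finP Pne mneg by (intro sum_pos) auto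
  then show ?thesis unfolding beta_def by (simp add: sum_negf)
qed

lemma ev_props: "ev \<in> \<sigma>" "m \<bullet> ev = 0" "\<forall>h\<in>H. 0 < h \<bullet> ev"
proof -
  show "ev \<in> \<sigma>" unfolding ev_def using rays_finite alpha_pos beta_pos gV
    by (intro sum_in) auto
  have split: "(\<Sum>v\<in>rays \<sigma>. f v) = (\<Sum>v\<in>P. f v) + (\<Sum>v\<in>rays \<sigma> - P. f v)" for f :: "_ \<Rightarrow> real"
    using rays_finite PV by (metis sum.subset_diff add.commute)
  have "m \<bullet> ev = (\<Sum>v\<in>rays \<sigma>. (if v \<in> P then alpha else beta) * (m \<bullet> prim_gen v))"
    by (simp add: ev_def inner_sum_right)
  also have "\<dots> = (\<Sum>v\<in>P. alpha * (m \<bullet> prim_gen v)) + (\<Sum>v\<in>rays \<sigma> - P. beta * (m \<bullet> prim_gen v))"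
    by (simp add: split)
  also have "\<dots> = alpha * (- beta) + beta * alpha"
  proof -
    have "(\<Sum>v\<in>P. alpha * (m \<bullet> prim_gen v)) = alpha * (- beta)"
      by (simp add: sum_distrib_left[symmetric] beta_def)
    moreover have "(\<Sum>v\<in>rays \<sigma> - P. beta * (m \<bullet> prim_gen v)) = beta * alpha"
      by (simp add: sum_distrib_left[symmetric] alpha_def)
    ultimately show ?thesis by simp
  qed
  also have "\<dots> = 0" by simp
  finally show "m \<bullet> ev = 0" .
  show "\<forall>h\<in>H. 0 < h \<bullet> ev"
  proof
    fix h assume h: "h \<in> H"
    obtain v where v: "v \<in> rays \<sigma>" "0 < h \<bullet> prim_gen v" using h_some_g[OF h] by blast
    have "h \<bullet> ev = (\<Sum>v\<in>rays \<sigma>. (if v \<in> P then alpha else beta) * (h \<bullet> prim_gen v))"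
      by (simp add: ev_def inner_sum_right)
    also have "\<dots> > 0"
    proof (rule sum_pos2[OF rays_finite v(1)])
      show "0 < (if v \<in> P then alpha else beta) * (h \<bullet> prim_gen v)"
        using v alpha_pos beta_pos by simp
      fix u assume "u \<in> rays \<sigma>"
      then show "0 \<le> (if u \<in> P then alpha else beta) * (h \<bullet> prim_gen u)"
        using hnn[OF gV h] alpha_pos beta_pos by simp
    qed
    finally show "0 < h \<bullet> ev" .
  qed
qed

lemma H_ne: "H \<noteq> {}"
proof
  assume "H = {}"
  then have "\<sigma> = UNIV" using sigH by simp
  obtain v where v: "v \<in> P" using Pne by blast
  then have "v \<in> rays \<sigma>" using PV by blast
  then have "prim_gen v \<noteq> 0" using g_props by blast
  moreover have "prim_gen v = 0" using pt \<open>\<sigma> = UNIV\<close> by blast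
  ultimately show False by simp
qed

definition v0 where "v0 = (SOME v. v \<in> P)"
lemma v0P: "v0 \<in> P" unfolding v0_def using Pne by (simp add: some_in_eq)

definition g0 where "g0 = (1 / (- (m \<bullet> prim_gen v0))) *\<^sub>R prim_gen v0"

lemma g0_props: "g0 \<in> \<sigma>" "m \<bullet> g0 = -1"
proof -
  have "m \<bullet> prim_gen v0 < 0" using mneg v0P by blast
  moreover have "prim_gen v0 \<in> \<sigma>" using gV v0P PV by blast
  moreover have "0 \<le> 1 / (- (m \<bullet> prim_gen v0))" using calculation by simp
  ultimately show "g0 \<in> \<sigma>" unfolding g0_def by (intro scale_in) auto
  show "m \<bullet> g0 = -1" unfolding g0_def using \<open>m \<bullet> prim_gen v0 < 0\<close> by simp
qed

definition Lf :: "real^'n \<Rightarrow> ((real^'n) set \<Rightarrow> real) \<Rightarrow> real" where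
  "Lf q x = (\<Sum>v\<in>rays \<sigma>. x v * (q \<bullet> prim_gen v))"
definition Ax :: "((real^'n) set \<Rightarrow> real) \<Rightarrow> real^'n" where
  "Ax x = (\<Sum>v\<in>rays \<sigma>. x v *\<^sub>R prim_gen v)"

lemma Lf_Ax: "q \<bullet> Ax x = Lf q x"
  by (simp add: Ax_def Lf_def inner_sum_right)

definition hw :: "real^'n \<Rightarrow> real \<times> ((real^'n) set \<Rightarrow> real) \<Rightarrow> real" where
  "hw h z = (1 - fst z) * (Lf h (snd z) / (- Lf m (snd z))) + fst z * (h \<bullet> g0)"
definition lam :: "real \<times> ((real^'n) set \<Rightarrow> real) \<Rightarrow> real" where
  "lam z = Min ((\<lambda>h. hw h z / (h \<bullet> ev)) ` H)"
definition wv :: "real \<times> ((real^'n) set \<Rightarrow> real) \<Rightarrow> real^'n" where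
  "wv z = ((1 - fst z) / (- Lf m (snd z))) *\<^sub>R Ax (snd z) + fst z *\<^sub>R g0"
definition Wv :: "real \<times> ((real^'n) set \<Rightarrow> real) \<Rightarrow> real^'n" where
  "Wv z = wv z - lam z *\<^sub>R ev"

lemma hw_eq: "h \<bullet> wv z = hw h z"
proof -
  have "h \<bullet> wv z = ((1 - fst z) / (- Lf m (snd z))) * (h \<bullet> Ax (snd z)) + fst z * (h \<bullet> g0)"
    by (simp only: wv_def inner_add_right inner_scaleR_right)
  also have "\<dots> = hw h z" by (simp add: hw_def Lf_Ax times_divide_eq_left times_divide_eq_right)
  finally show ?thesis .
qed

lemma hW_eq: "h \<bullet> Wv z = hw h z - lam z * (h \<bullet> ev)"
  by (simp add: Wv_def hw_eq inner_diff_right)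

definition SK where
  "SK = {x \<in> extensional (rays \<sigma>). (\<forall>v\<in>rays \<sigma>. 0 \<le> x v) \<and> sum x (rays \<sigma>) = 1 \<and>
          {v\<in>rays \<sigma>. x v \<noteq> 0} \<in> {\<Upsilon>\<in>Xi \<sigma>. \<Upsilon> \<subseteq> P}}"

lemma SK_Ax:
  assumes x: "x \<in> SK"
  shows "Ax x \<in> \<sigma>" "Lf m x < 0" "\<exists>h\<in>H. Lf h x = 0"
proof -
  have x0: "\<forall>v\<in>rays \<sigma>. 0 \<le> x v" and x1: "sum x (rays \<sigma>) = 1"
    and xX: "{v\<in>rays \<sigma>. x v \<noteq> 0} \<in> Xi \<sigma>" and xP: "{v\<in>rays \<sigma>. x v \<noteq> 0} \<subseteq> P"
    using x by (auto simp: SK_def)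
  show "Ax x \<in> \<sigma>" unfolding Ax_def using rays_finite x0 gV by (intro sum_in) auto
  show "\<exists>h\<in>H. Lf h x = 0" using Xi_tight[OF x0 x1 xX] by (simp add: Lf_Ax[symmetric] Ax_def)
  have "\<exists>v\<in>rays \<sigma>. x v \<noteq> 0"
  proof (rule ccontr)
    assume "\<not> ?thesis"
    then have "sum x (rays \<sigma>) = 0" by (intro sum.neutral) auto
    then show False using x1 by simp
  qed
  then obtain v where v: "v \<in> rays \<sigma>" "x v \<noteq> 0" by blast
  have tm: "0 \<le> x u * (- (m \<bullet> prim_gen u))" if "u \<in> rays \<sigma>" for u
  proof (cases "x u = 0")
    case False
    then have "u \<in> P" using xP that by blast
    then have "0 \<le> - (m \<bullet> prim_gen u)" using mneg by (simp add: less_imp_le)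
    then show ?thesis using x0 that by (simp only: mult_nonneg_nonneg)
  qed simp
  have "v \<in> P" using xP v by blast
  then have "0 < - (m \<bullet> prim_gen v)" using mneg by simp
  moreover have "0 < x v" using x0 v by (simp add: less_le)
  ultimately have "0 < x v * (- (m \<bullet> prim_gen v))" by (rule mult_pos_pos[rotated])
  then have "0 < (\<Sum>u\<in>rays \<sigma>. x u * (- (m \<bullet> prim_gen u)))"
    using tm by (intro sum_pos2[OF rays_finite v(1)]) auto
  then show "Lf m x < 0" unfolding Lf_def by (simp add: sum_negf)
qed

end

context rsetup begin

definition h2 :: "real \<times> ((real^'n) set \<Rightarrow> real) \<Rightarrow> (real^'n) set \<Rightarrow> real" where
  "h2 z = restrict (\<lambda>v. if v \<in> P then phi v (Wv z) / (\<Sum>u\<in>P. phi u (Wv z)) else 0) (rays \<sigma>)"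
definition h1 :: "real \<times> ((real^'n) set \<Rightarrow> real) \<Rightarrow> (real^'n) set \<Rightarrow> real" where
  "h1 z = restrict (\<lambda>v. (1 - fst z) * snd z v + fst z * h2 (0, snd z) v) (rays \<sigma>)"

lemma SKD:
  assumes "x \<in> SK"
  shows "x \<in> extensional (rays \<sigma>)" "\<forall>v\<in>rays \<sigma>. 0 \<le> x v" "sum x (rays \<sigma>) = 1"
    "{v\<in>rays \<sigma>. x v \<noteq> 0} \<in> Xi \<sigma>" "{v\<in>rays \<sigma>. x v \<noteq> 0} \<subseteq> P"
  using assms by (auto simp: SK_def)

lemma wv_props:
  assumes t: "t \<in> {0..1}" and x: "x \<in> SK"
  shows "wv (t, x) \<in> \<sigma>" "m \<bullet> wv (t, x) = -1"
proof -
  have mu: "Lf m x < 0" using SK_Ax[OF x] by blast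
  have c: "0 \<le> (1 - t) / (- Lf m x)" using t mu by (intro divide_nonneg_pos) auto
  have a: "((1 - t) / (- Lf m x)) *\<^sub>R Ax x \<in> \<sigma>" by (rule scale_in) (use SK_Ax[OF x] c in auto)
  have b: "t *\<^sub>R g0 \<in> \<sigma>" using g0_props t scale_in by auto
  show "wv (t, x) \<in> \<sigma>" unfolding wv_def fst_conv snd_conv by (rule add_in[OF a b])
  have "m \<bullet> wv (t, x) = hw m (t, x)" by (rule hw_eq)
  also have "\<dots> = (1 - t) * (Lf m x / (- Lf m x)) + t * (-1)" by (simp add: hw_def g0_props)
  also have "\<dots> = -1" using mu by simp
  finally show "m \<bullet> wv (t, x) = -1" .
qed

lemma lam_props:
  shows "\<forall>h\<in>H. lam z \<le> hw h z / (h \<bullet> ev)" "\<exists>h\<in>H. lam z = hw h z / (h \<bullet> ev)"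
proof -
  have fin: "finite ((\<lambda>h. hw h z / (h \<bullet> ev)) ` H)" using finH by simp
  have ne: "(\<lambda>h. hw h z / (h \<bullet> ev)) ` H \<noteq> {}" using H_ne by simp
  show "\<forall>h\<in>H. lam z \<le> hw h z / (h \<bullet> ev)" unfolding lam_def using fin by auto
  have "lam z \<in> (\<lambda>h. hw h z / (h \<bullet> ev)) ` H" unfolding lam_def using fin ne by (rule Min_in)
  then show "\<exists>h\<in>H. lam z = hw h z / (h \<bullet> ev)" by blast
qed

lemma Wv_props:
  assumes t: "t \<in> {0..1}" and x: "x \<in> SK"
  shows "Wv (t, x) \<in> \<sigma>" "\<exists>h\<in>H. h \<bullet> Wv (t, x) = 0" "m \<bullet> Wv (t, x) = -1"
proof -
  have pos: "\<And>h. h \<in> H \<Longrightarrow> 0 < h \<bullet> ev" using ev_props by blast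
  have "\<forall>h\<in>H. 0 \<le> h \<bullet> Wv (t, x)"
  proof
    fix h assume h: "h \<in> H"
    have "lam (t, x) \<le> hw h (t, x) / (h \<bullet> ev)" using lam_props h by blast
    then have "lam (t, x) * (h \<bullet> ev) \<le> hw h (t, x)" using pos[OF h] by (simp add: pos_le_divide_eq)
    then show "0 \<le> h \<bullet> Wv (t, x)" by (simp add: hW_eq)
  qed
  then show "Wv (t, x) \<in> \<sigma>" using sigH by blast
  obtain h where h: "h \<in> H" "lam (t, x) = hw h (t, x) / (h \<bullet> ev)" using lam_props by blast
  then have "h \<bullet> Wv (t, x) = 0" using pos[OF h(1)] by (simp add: hW_eq)
  then show "\<exists>h\<in>H. h \<bullet> Wv (t, x) = 0" using h by blast
  show "m \<bullet> Wv (t, x) = -1" using wv_props[OF t x] ev_props by (simp add: Wv_def inner_diff_right)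
qed

lemma D_pos:
  assumes t: "t \<in> {0..1}" and x: "x \<in> SK"
  shows "0 < (\<Sum>u\<in>P. phi u (Wv (t, x)))"
proof -
  have W: "Wv (t, x) \<in> \<sigma>" "m \<bullet> Wv (t, x) < 0" using Wv_props[OF t x] by auto
  obtain v where v: "v \<in> P" "0 < phi v (Wv (t, x))" using m_neg_supp[OF W] by blast
  show ?thesis using finP v phi_nn[OF W(1)] by (intro sum_pos2[OF finP v(1)]) auto
qed

lemma h2_SK:
  assumes t: "t \<in> {0..1}" and x: "x \<in> SK"
  shows "h2 (t, x) \<in> SK"
    "{v\<in>rays \<sigma>. h2 (t, x) v \<noteq> 0} \<subseteq> {v\<in>rays \<sigma>. \<forall>h\<in>H. h \<bullet> Wv (t, x) = 0 \<longrightarrow> h \<bullet> prim_gen v = 0}"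
proof -
  let ?W = "Wv (t, x)"
  let ?D = "\<Sum>u\<in>P. phi u ?W"
  have W: "?W \<in> \<sigma>" "\<exists>h\<in>H. h \<bullet> ?W = 0" using Wv_props[OF t x] by auto
  have D: "0 < ?D" by (rule D_pos[OF t x])
  have supp: "{v\<in>rays \<sigma>. h2 (t, x) v \<noteq> 0} \<subseteq> {v\<in>rays \<sigma>. \<forall>h\<in>H. h \<bullet> ?W = 0 \<longrightarrow> h \<bullet> prim_gen v = 0}"
  proof
    fix v assume "v \<in> {v\<in>rays \<sigma>. h2 (t, x) v \<noteq> 0}"
    then have v: "v \<in> rays \<sigma>" "h2 (t, x) v \<noteq> 0" by auto
    then have "v \<in> P" "phi v ?W \<noteq> 0" by (auto simp: h2_def split: if_splits)
    then have "0 < phi v ?W" using phi_nn[OF W(1)] by (simp add: less_le)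
    then have "\<forall>h\<in>H. h \<bullet> ?W = 0 \<longrightarrow> h \<bullet> prim_gen v = 0" using phi_pos[OF W(1) v(1)] by blast
    then show "v \<in> {v\<in>rays \<sigma>. \<forall>h\<in>H. h \<bullet> ?W = 0 \<longrightarrow> h \<bullet> prim_gen v = 0}" using v by blast
  qed
  then show "{v\<in>rays \<sigma>. h2 (t, x) v \<noteq> 0} \<subseteq> {v\<in>rays \<sigma>. \<forall>h\<in>H. h \<bullet> ?W = 0 \<longrightarrow> h \<bullet> prim_gen v = 0}" .
  obtain h0 where h0: "h0 \<in> H" "h0 \<bullet> ?W = 0" using W by blast
  have SX: "{v\<in>rays \<sigma>. \<forall>h\<in>H. h \<bullet> ?W = 0 \<longrightarrow> h \<bullet> prim_gen v = 0} \<in> Xi \<sigma>"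
    by (rule support_Xi[OF W(1) h0])
  have ext: "h2 (t, x) \<in> extensional (rays \<sigma>)" by (simp add: h2_def)
  have nn: "\<forall>v\<in>rays \<sigma>. 0 \<le> h2 (t, x) v" using phi_nn[OF W(1)] D by (simp add: h2_def)
  have "sum (h2 (t, x)) (rays \<sigma>) = (\<Sum>v\<in>rays \<sigma>. if v \<in> P then phi v ?W / ?D else 0)"
    by (rule sum.cong) (simp_all add: h2_def)
  also have "\<dots> = (\<Sum>v\<in>rays \<sigma> \<inter> P. phi v ?W / ?D)" using rays_finite by (simp add: sum.inter_restrict)
  also have "rays \<sigma> \<inter> P = P" using PV by blast
  also have "(\<Sum>v\<in>P. phi v ?W / ?D) = ?D / ?D" by (rule sum_divide_distrib[symmetric])
  also have "\<dots> = 1" using D by simp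
  finally have s1: "sum (h2 (t, x)) (rays \<sigma>) = 1" .
  have sP: "{v\<in>rays \<sigma>. h2 (t, x) v \<noteq> 0} \<subseteq> P" by (auto simp: h2_def split: if_splits)
  have "{v\<in>rays \<sigma>. h2 (t, x) v \<noteq> 0} \<in> Xi \<sigma>" using Xi_down[OF SX supp] .
  then show "h2 (t, x) \<in> SK" using ext nn s1 sP by (simp add: SK_def)
qed

lemma lam0:
  assumes x: "x \<in> SK"
  shows "lam (0, x) = 0" "Wv (0, x) = (1 / (- Lf m x)) *\<^sub>R Ax x"
proof -
  have mu: "Lf m x < 0" using SK_Ax[OF x] by blast
  have ax: "Ax x \<in> \<sigma>" using SK_Ax[OF x] by blast
  have r: "hw h (0, x) / (h \<bullet> ev) = (Lf h x / (- Lf m x)) / (h \<bullet> ev)" for h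
    by (simp add: hw_def)
  have nn: "0 \<le> hw h (0, x) / (h \<bullet> ev)" if h: "h \<in> H" for h
  proof -
    have "0 \<le> Lf h x" using hnn[OF ax h] by (simp add: Lf_Ax)
    moreover have "0 < h \<bullet> ev" using ev_props h by blast
    ultimately show ?thesis unfolding r using mu by (intro divide_nonneg_pos) auto
  qed
  obtain h0 where h0: "h0 \<in> H" "Lf h0 x = 0" using SK_Ax[OF x] by blast
  have z: "hw h0 (0, x) / (h0 \<bullet> ev) = 0" using h0 r by simp
  show "lam (0, x) = 0" unfolding lam_def
  proof (rule Min_eqI)
    show "finite ((\<lambda>h. hw h (0, x) / (h \<bullet> ev)) ` H)" using finH by simp
    show "\<And>y. y \<in> (\<lambda>h. hw h (0, x) / (h \<bullet> ev)) ` H \<Longrightarrow> 0 \<le> y" using nn by blast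
    show "0 \<in> (\<lambda>h. hw h (0, x) / (h \<bullet> ev)) ` H"
    proof (rule image_eqI[where x=h0])
      show "0 = hw h0 (0, x) / (h0 \<bullet> ev)" using z by simp
      show "h0 \<in> H" by (rule h0(1))
    qed
  qed
  then show "Wv (0, x) = (1 / (- Lf m x)) *\<^sub>R Ax x" by (simp add: Wv_def wv_def)
qed

lemma h1_SK:
  assumes t: "t \<in> {0..1}" and x: "x \<in> SK"
  shows "h1 (t, x) \<in> SK"
proof -
  let ?W = "Wv (0, x)"
  let ?S = "{v\<in>rays \<sigma>. \<forall>h\<in>H. h \<bullet> ?W = 0 \<longrightarrow> h \<bullet> prim_gen v = 0}"
  have t0: "(0::real) \<in> {0..1}" by simp
  have W: "?W \<in> \<sigma>" "\<exists>h\<in>H. h \<bullet> ?W = 0" using Wv_props[OF t0 x] by auto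
  obtain h0 where h0: "h0 \<in> H" "h0 \<bullet> ?W = 0" using W by blast
  have SX: "?S \<in> Xi \<sigma>" by (rule support_Xi[OF W(1) h0])
  have q: "h2 (0, x) \<in> SK" "{v\<in>rays \<sigma>. h2 (0, x) v \<noteq> 0} \<subseteq> ?S" using h2_SK[OF t0 x] by auto
  have mu: "Lf m x < 0" using SK_Ax[OF x] by blast
  have xS: "{v\<in>rays \<sigma>. x v \<noteq> 0} \<subseteq> ?S"
  proof (clarify)
    fix v h assume v: "v \<in> rays \<sigma>" "x v \<noteq> 0" and h: "h \<in> H" "h \<bullet> ?W = 0"
    have "h \<bullet> ?W = (1 / (- Lf m x)) * (h \<bullet> Ax x)" using lam0[OF x] by simp
    then have "h \<bullet> Ax x = 0" using h mu by simp
    then have hA: "h \<bullet> (\<Sum>v\<in>rays \<sigma>. x v *\<^sub>R prim_gen v) = 0" by (simp add: Ax_def)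
    have "0 < x v" using SKD(2)[OF x] v by (simp add: less_le)
    then show "h \<bullet> prim_gen v = 0" using comb_tight[OF SKD(2)[OF x] h(1) hA v(1)] by blast
  qed
  have ext: "h1 (t, x) \<in> extensional (rays \<sigma>)" by (simp add: h1_def)
  have nn: "\<forall>v\<in>rays \<sigma>. 0 \<le> h1 (t, x) v"
    using SKD(2)[OF x] SKD(2)[OF q(1)] t by (simp add: h1_def)
  have "sum (h1 (t, x)) (rays \<sigma>) = (\<Sum>v\<in>rays \<sigma>. (1 - t) * x v + t * h2 (0, x) v)"
    by (rule sum.cong) (simp_all add: h1_def)
  also have "\<dots> = (1 - t) * sum x (rays \<sigma>) + t * sum (h2 (0, x)) (rays \<sigma>)"
    by (simp add: sum.distrib sum_distrib_left)
  finally have "sum (h1 (t, x)) (rays \<sigma>) = (1 - t) * sum x (rays \<sigma>) + t * sum (h2 (0, x)) (rays \<sigma>)" .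
  then have s1: "sum (h1 (t, x)) (rays \<sigma>) = 1" using SKD(3)[OF x] SKD(3)[OF q(1)] by simp
  have sub: "{v\<in>rays \<sigma>. h1 (t, x) v \<noteq> 0} \<subseteq> {v\<in>rays \<sigma>. x v \<noteq> 0} \<union> {v\<in>rays \<sigma>. h2 (0, x) v \<noteq> 0}"
    by (auto simp: h1_def)
  then have "{v\<in>rays \<sigma>. h1 (t, x) v \<noteq> 0} \<subseteq> ?S" using xS q(2) by blast
  then have X: "{v\<in>rays \<sigma>. h1 (t, x) v \<noteq> 0} \<in> Xi \<sigma>" by (rule Xi_down[OF SX])
  have "{v\<in>rays \<sigma>. h1 (t, x) v \<noteq> 0} \<subseteq> P" using sub SKD(5)[OF x] SKD(5)[OF q(1)] by blast
  then show ?thesis using ext nn s1 X by (simp add: SK_def)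
qed

end

lemma continuous_map_Min:
  assumes "finite I" "I \<noteq> {}" "\<And>i. i \<in> I \<Longrightarrow> continuous_map X euclideanreal (f i)"
  shows "continuous_map X euclideanreal (\<lambda>x. Min ((\<lambda>i. f i x) ` I))"
  using assms
proof (induction I rule: finite_ne_induct)
  case (singleton i) then show ?case by simp
next
  case (insert i F)
  have "(\<lambda>x. Min ((\<lambda>i. f i x) ` insert i F)) = (\<lambda>x. min (f i x) (Min ((\<lambda>i. f i x) ` F)))"
    using insert by (simp add: Min_insert)
  then show ?case using insert by (simp add: continuous_map_real_min)
qed

lemma cm_fst: "continuous_map (prod_topology (subtopology euclideanreal {0..1}) X) euclideanreal fst"
proof -
  have "continuous_map (prod_topology (subtopology euclideanreal {0..1}) X) (subtopology euclideanreal {0..1}) fst"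
    by (rule continuous_map_fst)
  then show ?thesis by (simp add: continuous_map_in_subtopology)
qed

lemma cm_coord:
  assumes "v \<in> V"
  shows "continuous_map (prod_topology (subtopology euclideanreal {0..1}) (subtopology (powertop_real V) S)) euclideanreal (\<lambda>z. snd z v)"
proof -
  have "continuous_map (subtopology (powertop_real V) S) euclideanreal (\<lambda>x. x v)"
    using assms by (intro continuous_map_from_subtopology continuous_map_product_projection)
  then have "continuous_map (prod_topology (subtopology euclideanreal {0..1}) (subtopology (powertop_real V) S)) euclideanreal ((\<lambda>x. x v) \<circ> snd)"
    by (intro continuous_map_compose[OF continuous_map_snd])
  then show ?thesis by (simp add: o_def)
qed

context rsetup begin

abbreviation "KK \<equiv> {\<Upsilon>\<in>Xi \<sigma>. \<Upsilon> \<subseteq> P}"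
abbreviation "XX \<equiv> geom_real (rays \<sigma>) KK"
abbreviation "ZZ \<equiv> prod_topology (subtopology euclideanreal {0..1}) XX"

lemma geom_eq: "XX = subtopology (powertop_real (rays \<sigma>)) SK"
  by (simp add: geom_real_def SK_def)

lemma topX: "topspace XX = SK"
proof -
  have "SK \<subseteq> topspace (powertop_real (rays \<sigma>))"
    by (auto simp: SK_def PiE_def Pi_def)
  moreover have "topspace XX = topspace (powertop_real (rays \<sigma>)) \<inter> SK"
    unfolding geom_eq by (rule topspace_subtopology)
  ultimately show ?thesis by blast
qed

lemma topZ: "topspace ZZ = {0..1} \<times> SK"
  using topX by simp

lemma cont_Lf: "continuous_map ZZ euclideanreal (\<lambda>z. Lf q (snd z))"
  unfolding Lf_def geom_eq using rays_finite
  by (intro continuous_map_sum continuous_map_real_mult_right cm_coord) auto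

lemma cont_hw: "continuous_map ZZ euclideanreal (hw h)"
proof -
  have ne: "- Lf m (snd z) \<noteq> 0" if "z \<in> topspace ZZ" for z
    using that topZ SK_Ax by force
  have "continuous_map ZZ euclideanreal (\<lambda>z. (1 - fst z) * (Lf h (snd z) / (- Lf m (snd z))) + fst z * (h \<bullet> g0))"
    using ne by (intro continuous_intros cm_fst cont_Lf continuous_map_real_divide continuous_map_minus) auto
  then show ?thesis by (simp add: hw_def[abs_def])
qed

lemma evne: "h \<in> H \<Longrightarrow> h \<bullet> ev \<noteq> 0"
  using ev_props(3) by force

lemma cont_lam: "continuous_map ZZ euclideanreal lam"
proof -
  have "continuous_map ZZ euclideanreal (\<lambda>z. Min ((\<lambda>h. hw h z / (h \<bullet> ev)) ` H))"
    using finH H_ne evne by (intro continuous_map_Min continuous_map_real_divide cont_hw) auto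
  then show ?thesis by (simp add: lam_def[abs_def])
qed

lemma cont_phi: "continuous_map ZZ euclideanreal (\<lambda>z. phi v (Wv z))"
proof -
  have "continuous_map ZZ euclideanreal (\<lambda>z. \<Prod>h\<in>{h\<in>H. 0 < h \<bullet> prim_gen v}. hw h z - lam z * (h \<bullet> ev))"
    using finH by (intro continuous_map_prod continuous_map_diff cont_hw continuous_map_real_mult_right cont_lam) auto
  then show ?thesis by (simp add: phi_def hW_eq)
qed

lemma cont_h2: "continuous_map ZZ XX h2"
proof -
  have D: "(\<Sum>u\<in>P. phi u (Wv z)) \<noteq> 0" if "z \<in> topspace ZZ" for z
  proof -
    from that have "z \<in> {0..1} \<times> SK" by (simp only: topZ)
    then have z: "fst z \<in> {0..1}" "snd z \<in> SK" by auto
    show ?thesis using D_pos[OF z] by simp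
  qed
  have comp: "continuous_map ZZ euclideanreal (\<lambda>z. h2 z v)" if v: "v \<in> rays \<sigma>" for v
  proof (cases "v \<in> P")
    case True
    have "continuous_map ZZ euclideanreal (\<lambda>z. phi v (Wv z) / (\<Sum>u\<in>P. phi u (Wv z)))"
      using D finP by (intro continuous_map_real_divide cont_phi continuous_map_sum) auto
    then show ?thesis using True v by (simp add: h2_def)
  next
    case False
    then show ?thesis using v by (simp add: h2_def)
  qed
  have cpt: "continuous_map ZZ (powertop_real (rays \<sigma>)) h2"
    unfolding continuous_map_componentwise using comp by (auto simp: h2_def)
  have "h2 z \<in> SK" if "z \<in> topspace ZZ" for z
  proof -
    from that have "z \<in> {0..1} \<times> SK" by (simp only: topZ)
    then obtain t x where "z = (t, x)" "t \<in> {0..1}" "x \<in> SK" by auto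
    then show ?thesis using h2_SK by simp
  qed
  then have "h2 \<in> topspace ZZ \<rightarrow> SK" by blast
  with cpt show ?thesis unfolding geom_eq by (rule continuous_map_into_subtopology)
qed

lemma cont_h1: "continuous_map ZZ XX h1"
proof -
  have z0: "continuous_map ZZ ZZ (\<lambda>z. (0, snd z))"
  proof (intro continuous_map_pairedI)
    show "continuous_map ZZ (subtopology euclideanreal {0..1}) (\<lambda>x. 0)" by simp
    show "continuous_map ZZ XX snd" by (rule continuous_map_snd)
  qed
  have comp: "continuous_map ZZ euclideanreal (\<lambda>z. h1 z v)" if v: "v \<in> rays \<sigma>" for v
  proof -
    have c2: "continuous_map ZZ euclideanreal ((\<lambda>z. h2 z v) \<circ> (\<lambda>z. (0, snd z)))"
    proof (rule continuous_map_compose[OF z0])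
      have "continuous_map XX euclideanreal (\<lambda>x. x v)"
        unfolding geom_eq using v by (intro continuous_map_from_subtopology continuous_map_product_projection)
      then show "continuous_map ZZ euclideanreal (\<lambda>z. h2 z v)"
        using continuous_map_compose[OF cont_h2] by (simp add: o_def)
    qed
    have "continuous_map ZZ euclideanreal (\<lambda>z. (1 - fst z) * snd z v + fst z * h2 (0, snd z) v)"
      using c2 v unfolding geom_eq o_def
      by (intro continuous_intros cm_fst cm_coord) auto
    then show ?thesis using v by (simp add: h1_def geom_eq)
  qed
  have cpt: "continuous_map ZZ (powertop_real (rays \<sigma>)) h1"
    unfolding continuous_map_componentwise using comp by (auto simp: h1_def)
  have "h1 z \<in> SK" if "z \<in> topspace ZZ" for z
  proof -
    from that have "z \<in> {0..1} \<times> SK" by (simp only: topZ)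
    then obtain t x where "z = (t, x)" "t \<in> {0..1}" "x \<in> SK" by auto
    then show ?thesis using h1_SK by simp
  qed
  then have "h1 \<in> topspace ZZ \<rightarrow> SK" by blast
  with cpt show ?thesis unfolding geom_eq by (rule continuous_map_into_subtopology)
qed

lemma contractible: "contractible_space XX"
proof -
  have hom1: "homotopic_with (\<lambda>x. True) XX XX id (\<lambda>x. h2 (0, x))"
  proof -
    have "h1 (0, x) = id x" if "x \<in> topspace XX" for x
    proof -
      from that have "x \<in> SK" by (simp only: topX)
      then show ?thesis by (auto simp: h1_def SK_def restrict_def extensional_def)
    qed
    moreover have "h1 (1, x) = h2 (0, x)" for x
      by (auto simp: h1_def h2_def restrict_def)
    ultimately show ?thesis using cont_h1 by (subst homotopic_with) auto
  qed
  have hom2: "homotopic_with (\<lambda>x. True) XX XX (\<lambda>x. h2 (0, x)) (\<lambda>x. h2 (1, undefined))"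
  proof -
    have W1: "Wv (1, x) = Wv (1, undefined)" for x
      unfolding Wv_def wv_def lam_def hw_def by simp
    have "h2 (1, x) = h2 (1, undefined)" for x
      unfolding h2_def by (simp only: W1[of x])
    then show ?thesis using cont_h2 by (subst homotopic_with) auto
  qed
  show ?thesis unfolding contractible_space_def using homotopic_with_trans[OF hom1 hom2] by blast
qed

end

lemma convex_dual_cone: "convex (dual_cone (C :: (real^'n) set))"
proof (rule convexI)
  fix x y :: "real^'n" and u v :: real
  assume x: "x \<in> dual_cone C" and y: "y \<in> dual_cone C" and uv: "0 \<le> u" "0 \<le> v" "u + v = 1"
  show "u *\<^sub>R x + v *\<^sub>R y \<in> dual_cone C"
    unfolding dual_cone_def
  proof (rule CollectI, rule ballI)
    fix n assume n: "n \<in> C"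
    have "0 \<le> x \<bullet> n" "0 \<le> y \<bullet> n" using x y n by (auto simp: dual_cone_def)
    then have "0 \<le> u * (x \<bullet> n) + v * (y \<bullet> n)" using uv by (simp add: add_nonneg_nonneg mult_nonneg_nonneg)
    then show "0 \<le> (u *\<^sub>R x + v *\<^sub>R y) \<bullet> n" by (simp add: inner_add_left)
  qed
qed

theorem mainTheorem8:
  fixes \<sigma> :: "(real^'n) set" and P :: "(real^'n) set set"
  assumes "rational_polyhedral_cone \<sigma>"
    and "strongly_convex \<sigma>"
    and "aff_dim \<sigma> = int CARD('n)"
    and "P \<subseteq> rays \<sigma>"
    and "aff_dim (dual_cone (sigma_Pi \<sigma> P)) = int CARD('n)"
  shows "P = rays \<sigma> \<or>
         contractible_space (geom_real (rays \<sigma>) {\<Upsilon>\<in>Xi \<sigma>. \<Upsilon> \<subseteq> P})"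
proof (cases "P = rays \<sigma>")
  case True then show ?thesis by simp
next
  case PnV: False
  obtain S0 where S0: "finite S0" "\<forall>v\<in>S0. lattice_pt v" "\<sigma> = gen_cone S0"
    using assms(1) unfolding rational_polyhedral_cone_def by blast
  interpret rcone \<sigma> S0 using S0 assms(2,3) by unfold_locales auto
  show ?thesis
  proof (cases "P = {}")
    case True
    have "topspace (geom_real (rays \<sigma>) {\<Upsilon>\<in>Xi \<sigma>. \<Upsilon> \<subseteq> P}) = {}"
    proof (rule ccontr)
      assume "topspace (geom_real (rays \<sigma>) {\<Upsilon>\<in>Xi \<sigma>. \<Upsilon> \<subseteq> P}) \<noteq> {}"
      then obtain x where "x \<in> topspace (geom_real (rays \<sigma>) {\<Upsilon>\<in>Xi \<sigma>. \<Upsilon> \<subseteq> P})" by blast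
      then have x: "(\<Sum>v\<in>rays \<sigma>. x v) = 1" "{v\<in>rays \<sigma>. x v \<noteq> 0} \<subseteq> P"
        unfolding geom_real_def topspace_subtopology by auto
      then have "\<forall>v\<in>rays \<sigma>. x v = 0" using True by blast
      then have "(\<Sum>v\<in>rays \<sigma>. x v) = 0" by simp
      then show False using x by simp
    qed
    then show ?thesis by (simp add: contractible_space_subset_singleton)
  next
    case Pne: False
    obtain H where H: "finite H" "0 \<notin> H" "\<sigma> = {x. \<forall>h\<in>H. 0 \<le> h \<bullet> x}" by (rule ineqs)
    define G where "G = (\<lambda>\<rho>. - prim_gen \<rho>) ` P \<union> prim_gen ` (rays \<sigma> - P)"
    have finG: "finite G" unfolding G_def using rays_finite assms(4) finite_subset by auto
    define D where "D = dual_cone (sigma_Pi \<sigma> P)"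
    have "affine hull D = UNIV" using assms(5) aff_dim_eq_full[of D] by (simp add: D_def)
    then have "rel_interior D = interior D" by (rule rel_interior_interior)
    moreover have "D \<noteq> {}" by (auto simp: D_def dual_cone_def intro!: exI[where x=0])
    moreover have "rel_interior D \<noteq> {}"
      using rel_interior_eq_empty[OF convex_dual_cone[of "sigma_Pi \<sigma> P"]] \<open>D \<noteq> {}\<close> by (simp add: D_def)
    ultimately have "interior D \<noteq> {}" by simp
    then obtain m where "m \<in> interior D" by blast
    then obtain \<epsilon> where e: "\<epsilon> > 0" "ball m \<epsilon> \<subseteq> D" using mem_interior by blast
    have key: "0 < m \<bullet> n" if n: "n \<in> G" "n \<noteq> 0" for n
    proof -
      have nS: "n \<in> sigma_Pi \<sigma> P" unfolding sigma_Pi_def using gen_cone_mem[OF finG n(1)] G_def by simp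
      have hn: "norm n > 0" using n by simp
      define q where "q = m - (\<epsilon> / 2 / norm n) *\<^sub>R n"
      have "dist m q < \<epsilon>" using e hn by (simp add: q_def dist_norm)
      then have "q \<in> D" using e by auto
      then have "0 \<le> q \<bullet> n" using nS by (simp add: D_def dual_cone_def)
      moreover have "q \<bullet> n = m \<bullet> n - (\<epsilon> / 2) * norm n"
        using hn by (simp add: q_def inner_diff_left power2_norm_eq_inner[symmetric] power2_eq_square)
      moreover have "0 < (\<epsilon> / 2) * norm n" using e hn by simp
      ultimately show ?thesis by linarith
    qed
    have mneg: "\<forall>v\<in>P. m \<bullet> prim_gen v < 0"
    proof
      fix v assume v: "v \<in> P"
      then have "prim_gen v \<noteq> 0" using g_props assms(4) by blast
      then have "0 < m \<bullet> (- prim_gen v)" using v by (intro key) (auto simp: G_def)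
      then show "m \<bullet> prim_gen v < 0" by simp
    qed
    have mpos: "\<forall>v\<in>rays \<sigma> - P. 0 < m \<bullet> prim_gen v"
    proof
      fix v assume v: "v \<in> rays \<sigma> - P"
      then have "prim_gen v \<noteq> 0" using g_props by blast
      then show "0 < m \<bullet> prim_gen v" using v by (intro key) (auto simp: G_def)
    qed
    interpret rsetup \<sigma> S0 H P m
      using H assms(4) Pne PnV mneg mpos by unfold_locales auto
    show ?thesis using contractible by blast
  qed
qed

end
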